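(* Let $m_1,m_2,n_1,n_2\in\mathbb{N}$ and let $U$ ($m_1\times n_2$), $\bar U$ ($m_2\times n_1$), $V$ ($n_1\times m_1$), $\bar V$ ($n_2\times m_2$), $S$ ($n_1\times n_1$), $\bar S$ ($n_2\times n_2$), $K$ ($n_1\times n_2$), $\bar K$ ($n_2\times n_1$) be constant complex matrices, $S,\bar S$ invertible in the discrete cases. Assume: (i) continuous: $SK+K\bar S=VU$, $\bar S\bar K+\bar KS=\bar V\bar U$, $\Xi=e^{-xS-\mathrm{i}tS^2}$, $\bar\Xi=e^{-x\bar S+\mathrm{i}t\bar S^2}$, $x,t\in\mathbb{R}$; (ii) semi-discrete: $S^{-1}K-K\bar S=VU$, $\bar S^{-1}\bar K-\bar KS=\bar V\bar U$, $\Xi=S^xe^{-\mathrm{i}t\omega(S)}$, $\bar\Xi=\bar S^xe^{\mathrm{i}t\omega(\bar S)}$, $x\in\mathbb{Z},t\in\mathbb{R}$; (iii) fully discrete: the same Sylvester equations as (ii), $\Xi=S^x\Omega(S)^t$, $\bar\Xi=\bar S^x\bar\Omega(\bar S)^t$, $x,t\in\mathbb{Z}$; where $\omega(S)=S+S^{-1}-2I$, $\Omega(S)=[I+\mathrm{i}(I-S^{-1})][I-\mathrm{i}(I-S)]^{-1}$, $\bar\Omega(\bar S)=[I-\mathrm{i}(I-\bar S^{-1})][I+\mathrm{i}(I-\bar S)]^{-1}$. Then (wherever the inverses exist) $$q=U(\bar\Xi^{-1}-\bar K\Xi K)^{-1}\bar V,\quad \bar q=\bar U(\Xi^{-1}-K\bar\Xi\bar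 K)^{-1}V,$$ $$p=U\bar\Xi\bar K(\Xi^{-1}-K\bar\Xi\bar K)^{-1}V,\quad \bar p=\bar U\Xi K(\bar\Xi^{-1}-\bar K\Xi K)^{-1}\bar V$$ solve the respective (continuous, semi-discrete, fully discrete) NLS system.
   Context: For matrices $q$ ($m_1\times m_2$), $\bar q$ ($m_2\times m_1$), $p$ ($m_1\times m_1$), $\bar p$ ($m_2\times m_2$): continuous NLS system: $\mathrm{i}q_t+q_{xx}-2q\bar qq=0$, $-\mathrm{i}\bar q_t+\bar q_{xx}-2\bar qq\bar q=0$, $p_x=-q\bar q$, $\bar p_x=-\bar qq$. With $f^\pm(x,t)=f(x\pm1,t)$, $f_\pm(x,t)=f(x,t\pm1)$, $\dot f=\partial_tf$: semi-discrete (Ablowitz–Ladik) system: $\mathrm{i}\dot q+q^+-2q+q^--q^+\bar qq-q\bar qq^-=0$, $-\mathrm{i}\dot{\bar q}+\bar q^+-2\bar q+\bar q^--\bar q^+q\bar q-\bar qq\bar q^-=0$, $p^+-p=-q^+\bar q$, $\bar p^+-\bar p=-\bar q^+q$. Fully discrete system: $p^+-p=-q^+\bar q$, $\bar p^+-\bar p=-\bar q^+q$ and $\mathrm{i}(q_+-q)+(q^+-q)_+-(q-q^-)-(q^+\bar qq)_+-q\bar qq^-+(p_+-p)q_++q(\bar p_+-\bar p)=0$, $-\mathrm{i}(\bar q_+-\bar q)+(\bar q^+-\bar q)_+-(\bar q-\bar q^-)-(\bar q^+q\bar q)_+-\bar qq\bar q^-+(\bar p_+-\bar p)\bar q_++\bar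 q(p_+-p)=0$. *)

theory Defs
  imports "HOL-Analysis.Analysis"
begin

text \<open>Matrices are elements of \<open>complex^'c^'r\<close> (rows indexed by \<open>'r\<close>, columns by \<open>'c\<close>),
  with matrix product \<open>**\<close>, identity \<open>mat 1\<close>, \<open>invertible\<close> and \<open>matrix_inv\<close> from HOL-Analysis.\<close>

definition cscale :: "complex \<Rightarrow> complex^'c^'r \<Rightarrow> complex^'c^'r" where
  "cscale c A = (\<chi> i j. c * A$i$j)"

primrec mpow :: "complex^'n^'n \<Rightarrow> nat \<Rightarrow> complex^'n^'n" where
  "mpow A 0 = mat 1"
| "mpow A (Suc k) = A ** mpow A k"

definition mpowi :: "complex^'n^'n \<Rightarrow> int \<Rightarrow> complex^'n^'n" where
  "mpowi A k = (if 0 \<le> k then mpow A (nat k) else mpow (matrix_inv A) (nat (- k)))"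

definition mexp :: "complex^'n^'n \<Rightarrow> complex^'n^'n" where
  "mexp A = (\<chi> i j. \<Sum>k. (mpow A k)$i$j / of_nat (fact k))"

definition omega :: "complex^'n^'n \<Rightarrow> complex^'n^'n" where
  "omega S = S + matrix_inv S - cscale 2 (mat 1)"

definition Omega :: "complex^'n^'n \<Rightarrow> complex^'n^'n" where
  "Omega S = (mat 1 + cscale \<i> (mat 1 - matrix_inv S)) ** matrix_inv (mat 1 - cscale \<i> (mat 1 - S))"

definition Omegabar :: "complex^'n^'n \<Rightarrow> complex^'n^'n" where
  "Omegabar S = (mat 1 - cscale \<i> (mat 1 - matrix_inv S)) ** matrix_inv (mat 1 + cscale \<i> (mat 1 - S))"

subsection \<open>The phase matrices \<open>\<Xi>\<close>, \<open>\<Xi>bar\<close> in the three cases\<close>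

definition XiC :: "complex^'n^'n \<Rightarrow> real \<Rightarrow> real \<Rightarrow> complex^'n^'n" where
  "XiC S x t = mexp (- cscale (complex_of_real x) S - cscale (\<i> * complex_of_real t) (S ** S))"

definition XibC :: "complex^'n^'n \<Rightarrow> real \<Rightarrow> real \<Rightarrow> complex^'n^'n" where
  "XibC Sb x t = mexp (- cscale (complex_of_real x) Sb + cscale (\<i> * complex_of_real t) (Sb ** Sb))"

definition XiS :: "complex^'n^'n \<Rightarrow> int \<Rightarrow> real \<Rightarrow> complex^'n^'n" where
  "XiS S x t = mpowi S x ** mexp (- cscale (\<i> * complex_of_real t) (omega S))"

definition XibS :: "complex^'n^'n \<Rightarrow> int \<Rightarrow> real \<Rightarrow> complex^'n^'n" where
  "XibS Sb x t = mpowi Sb x ** mexp (cscale (\<i> * complex_of_real t) (omega Sb))"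

definition XiF :: "complex^'n^'n \<Rightarrow> int \<Rightarrow> int \<Rightarrow> complex^'n^'n" where
  "XiF S x t = mpowi S x ** mpowi (Omega S) t"

definition XibF :: "complex^'n^'n \<Rightarrow> int \<Rightarrow> int \<Rightarrow> complex^'n^'n" where
  "XibF Sb x t = mpowi Sb x ** mpowi (Omegabar Sb) t"

definition qsol ::
  "complex^'n2^'m1 \<Rightarrow> complex^'m2^'n2 \<Rightarrow> complex^'n2^'n1 \<Rightarrow> complex^'n1^'n2
   \<Rightarrow> complex^'n1^'n1 \<Rightarrow> complex^'n2^'n2 \<Rightarrow> complex^'m2^'m1" where
  "qsol U Vb K Kb Xi Xib = U ** matrix_inv (matrix_inv Xib - Kb ** Xi ** K) ** Vb"

definition qbsol ::
  "complex^'n1^'m2 \<Rightarrow> complex^'m1^'n1 \<Rightarrow> complex^'n2^'n1 \<Rightarrow> complex^'n1^'n2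
   \<Rightarrow> complex^'n1^'n1 \<Rightarrow> complex^'n2^'n2 \<Rightarrow> complex^'m1^'m2" where
  "qbsol Ub V K Kb Xi Xib = Ub ** matrix_inv (matrix_inv Xi - K ** Xib ** Kb) ** V"

definition psol ::
  "complex^'n2^'m1 \<Rightarrow> complex^'m1^'n1 \<Rightarrow> complex^'n2^'n1 \<Rightarrow> complex^'n1^'n2
   \<Rightarrow> complex^'n1^'n1 \<Rightarrow> complex^'n2^'n2 \<Rightarrow> complex^'m1^'m1" where
  "psol U V K Kb Xi Xib = U ** Xib ** Kb ** matrix_inv (matrix_inv Xi - K ** Xib ** Kb) ** V"

definition pbsol ::
  "complex^'n1^'m2 \<Rightarrow> complex^'m2^'n2 \<Rightarrow> complex^'n2^'n1 \<Rightarrow> complex^'n1^'n2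
   \<Rightarrow> complex^'n1^'n1 \<Rightarrow> complex^'n2^'n2 \<Rightarrow> complex^'m2^'m2" where
  "pbsol Ub Vb K Kb Xi Xib = Ub ** Xi ** K ** matrix_inv (matrix_inv Xib - Kb ** Xi ** K) ** Vb"

text \<open>"The inverses exist" at a given point.\<close>
definition regular ::
  "complex^'n2^'n1 \<Rightarrow> complex^'n1^'n2 \<Rightarrow> complex^'n1^'n1 \<Rightarrow> complex^'n2^'n2 \<Rightarrow> bool" where
  "regular K Kb Xi Xib \<longleftrightarrow> invertible Xi \<and> invertible Xib \<and>
     invertible (matrix_inv Xib - Kb ** Xi ** K) \<and> invertible (matrix_inv Xi - K ** Xib ** Kb)"

definition dx :: "(real \<Rightarrow> real \<Rightarrow> 'a::real_normed_vector) \<Rightarrow> real \<Rightarrow> real \<Rightarrow> 'a" where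
  "dx f x t = vector_derivative (\<lambda>y. f y t) (at x)"

definition dt :: "('b \<Rightarrow> real \<Rightarrow> 'a::real_normed_vector) \<Rightarrow> 'b \<Rightarrow> real \<Rightarrow> 'a" where
  "dt f x t = vector_derivative (\<lambda>s. f x s) (at t)"

definition NLS_cont_at ::
  "(real \<Rightarrow> real \<Rightarrow> complex^'m2^'m1) \<Rightarrow> (real \<Rightarrow> real \<Rightarrow> complex^'m1^'m2)
   \<Rightarrow> (real \<Rightarrow> real \<Rightarrow> complex^'m1^'m1) \<Rightarrow> (real \<Rightarrow> real \<Rightarrow> complex^'m2^'m2)
   \<Rightarrow> real \<Rightarrow> real \<Rightarrow> bool" where
  "NLS_cont_at q qb p pb x t \<longleftrightarrow>
     (\<lambda>y. q y t) differentiable (at x) \<and> (\<lambda>y. dx q y t) differentiable (at x) \<and>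
     (\<lambda>s. q x s) differentiable (at t) \<and>
     (\<lambda>y. qb y t) differentiable (at x) \<and> (\<lambda>y. dx qb y t) differentiable (at x) \<and>
     (\<lambda>s. qb x s) differentiable (at t) \<and>
     (\<lambda>y. p y t) differentiable (at x) \<and> (\<lambda>y. pb y t) differentiable (at x) \<and>
     cscale \<i> (dt q x t) + dx (dx q) x t - cscale 2 (q x t ** qb x t ** q x t) = 0 \<and>
     - cscale \<i> (dt qb x t) + dx (dx qb) x t - cscale 2 (qb x t ** q x t ** qb x t) = 0 \<and>
     dx p x t = - (q x t ** qb x t) \<and>
     dx pb x t = - (qb x t ** q x t)"

definition NLS_semi_at ::
  "(int \<Rightarrow> real \<Rightarrow> complex^'m2^'m1) \<Rightarrow> (int \<Rightarrow> real \<Rightarrow> complex^'m1^'m2)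
   \<Rightarrow> (int \<Rightarrow> real \<Rightarrow> complex^'m1^'m1) \<Rightarrow> (int \<Rightarrow> real \<Rightarrow> complex^'m2^'m2)
   \<Rightarrow> int \<Rightarrow> real \<Rightarrow> bool" where
  "NLS_semi_at q qb p pb x t \<longleftrightarrow>
     (\<lambda>s. q x s) differentiable (at t) \<and> (\<lambda>s. qb x s) differentiable (at t) \<and>
     cscale \<i> (dt q x t) + q (x+1) t - cscale 2 (q x t) + q (x-1) t
       - q (x+1) t ** qb x t ** q x t - q x t ** qb x t ** q (x-1) t = 0 \<and>
     - cscale \<i> (dt qb x t) + qb (x+1) t - cscale 2 (qb x t) + qb (x-1) t
       - qb (x+1) t ** q x t ** qb x t - qb x t ** q x t ** qb (x-1) t = 0 \<and>
     p (x+1) t - p x t = - (q (x+1) t ** qb x t) \<and>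
     pb (x+1) t - pb x t = - (qb (x+1) t ** q x t)"

definition NLS_full_at ::
  "(int \<Rightarrow> int \<Rightarrow> complex^'m2^'m1) \<Rightarrow> (int \<Rightarrow> int \<Rightarrow> complex^'m1^'m2)
   \<Rightarrow> (int \<Rightarrow> int \<Rightarrow> complex^'m1^'m1) \<Rightarrow> (int \<Rightarrow> int \<Rightarrow> complex^'m2^'m2)
   \<Rightarrow> int \<Rightarrow> int \<Rightarrow> bool" where
  "NLS_full_at q qb p pb x t \<longleftrightarrow>
     p (x+1) t - p x t = - (q (x+1) t ** qb x t) \<and>
     pb (x+1) t - pb x t = - (qb (x+1) t ** q x t) \<and>
     cscale \<i> (q x (t+1) - q x t) + (q (x+1) (t+1) - q x (t+1)) - (q x t - q (x-1) t)
       - q (x+1) (t+1) ** qb x (t+1) ** q x (t+1) - q x t ** qb x t ** q (x-1) t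
       + (p x (t+1) - p x t) ** q x (t+1) + q x t ** (pb x (t+1) - pb x t) = 0 \<and>
     - cscale \<i> (qb x (t+1) - qb x t) + (qb (x+1) (t+1) - qb x (t+1)) - (qb x t - qb (x-1) t)
       - qb (x+1) (t+1) ** q x (t+1) ** qb x (t+1) - qb x t ** q x t ** qb (x-1) t
       + (pb x (t+1) - pb x t) ** qb x (t+1) + qb x t ** (p x (t+1) - p x t) = 0"

end

theory Submission
  imports Defs
begin

lemma mm_add_r: "(A + B) ** C = A ** C + B ** (C::'a::semiring_1^_^_)"
  by (vector matrix_matrix_mult_def sum.distrib[symmetric] field_simps)
lemma mm_diff_l: "(A::'a::ring_1^_^_) ** (B - C) = A ** B - A ** C"
  by (vector matrix_matrix_mult_def sum_subtractf[symmetric] field_simps)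
lemma mm_diff_r: "((A::'a::ring_1^_^_) - B) ** C = A ** C - B ** C"
  by (vector matrix_matrix_mult_def sum_subtractf[symmetric] field_simps)
lemma mm_neg_l: "(- (A::'a::ring_1^_^_)) ** B = - (A ** B)"
  by (vector matrix_matrix_mult_def sum_negf[symmetric])
lemma mm_neg_r: "(A::'a::ring_1^_^_) ** (- B) = - (A ** B)"
  by (vector matrix_matrix_mult_def sum_negf[symmetric])
lemma cs_mm_l: "cscale c A ** B = cscale c (A ** B)"
  by (simp add: cscale_def matrix_matrix_mult_def vec_eq_iff sum_distrib_left mult_ac)
lemma cs_mm_r: "A ** cscale c B = cscale c (A ** B)"
  by (simp add: cscale_def matrix_matrix_mult_def vec_eq_iff sum_distrib_left mult_ac)
lemma cs_add: "cscale c (A + B) = cscale c A + cscale c B"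
  by (simp add: cscale_def vec_eq_iff distrib_left)
lemma cs_diff: "cscale c (A - B) = cscale c A - cscale c B"
  by (simp add: cscale_def vec_eq_iff right_diff_distrib)
lemma cs_neg: "cscale c (- A) = - cscale c A"
  by (simp add: cscale_def vec_eq_iff)
lemma cs_cs: "cscale c (cscale d A) = cscale (c * d) A"
  by (simp add: cscale_def vec_eq_iff mult.assoc)
lemma cs_1[simp]: "cscale 1 A = A"
  by (simp add: cscale_def vec_eq_iff)
lemma cs_z[simp]: "cscale c 0 = 0"
  by (simp add: cscale_def vec_eq_iff)
lemma cs_0[simp]: "cscale 0 A = 0"
  by (simp add: cscale_def vec_eq_iff)
lemma cs_addc: "cscale (c + d) A = cscale c A + cscale d A"
  by (simp add: cscale_def vec_eq_iff distrib_right)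
lemma cs_diffc: "cscale (c - d) A = cscale c A - cscale d A"
  by (simp add: cscale_def vec_eq_iff left_diff_distrib)
lemma cs_negc: "cscale (- c) A = - cscale c A"
  by (simp add: cscale_def vec_eq_iff)
lemma cs_of_real: "cscale (complex_of_real r) A = r *\<^sub>R A"
  apply (simp add: cscale_def vec_eq_iff) apply (simp add: scaleR_conv_of_real) done

lemmas msimps = matrix_mul_assoc matrix_add_ldistrib mm_add_r mm_diff_l mm_diff_r mm_neg_l mm_neg_r
  cs_mm_l cs_mm_r cs_add cs_diff cs_neg cs_cs

lemma inv_r: "invertible A \<Longrightarrow> A ** matrix_inv A = mat 1"
  unfolding invertible_def matrix_inv_def by (rule someI_ex[THEN conjunct1])
lemma inv_l: "invertible A \<Longrightarrow> matrix_inv A ** A = mat 1"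
  unfolding invertible_def matrix_inv_def by (rule someI_ex[THEN conjunct2])

lemma inv_r': "invertible A \<Longrightarrow> A ** (matrix_inv A ** B) = B"
  by (simp add: matrix_mul_assoc inv_r)
lemma inv_l': "invertible A \<Longrightarrow> matrix_inv A ** (A ** B) = B"
  by (simp add: matrix_mul_assoc inv_l)

lemma inv_unique:
  fixes A :: "'a::semiring_1^'n^'n"
  assumes "A ** B = mat 1" "B ** A = mat 1" shows "matrix_inv A = B"
proof -
  have i: "invertible A" using assms invertible_def by blast
  have "matrix_inv A = matrix_inv A ** (A ** B)" by (simp add: assms)
  also have "\<dots> = B" by (simp add: matrix_mul_assoc inv_l i)
  finally show ?thesis .
qed

lemma invertible_inv: "invertible A \<Longrightarrow> invertible (matrix_inv A)"
  using inv_l inv_r invertible_def by blast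
lemma inv_inv: "invertible (A::'a::semiring_1^'n^'n) \<Longrightarrow> matrix_inv (matrix_inv A) = A"
  by (rule inv_unique) (simp_all add: inv_l inv_r)

lemma comm_inv:
  fixes A B :: "'a::semiring_1^'n^'n"
  assumes "invertible A" "A ** B = B ** A"
  shows "matrix_inv A ** B = B ** matrix_inv A"
proof -
  have "matrix_inv A ** B = matrix_inv A ** (B ** (A ** matrix_inv A))" by (simp add: inv_r assms)
  also have "\<dots> = matrix_inv A ** ((A ** B) ** matrix_inv A)" by (simp only: matrix_mul_assoc assms)
  also have "\<dots> = (matrix_inv A ** A) ** (B ** matrix_inv A)" by (simp only: matrix_mul_assoc)
  also have "\<dots> = B ** matrix_inv A" by (simp add: inv_l assms)
  finally show ?thesis .
qed



lemma cassoc: "A ** B = B ** A \<Longrightarrow> C ** A ** B = C ** B ** A"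
  by (metis matrix_mul_assoc)
lemma inv_r2: "invertible A \<Longrightarrow> C ** A ** matrix_inv A = C"
  by (metis inv_r matrix_mul_assoc matrix_mul_rid)
lemma inv_l2: "invertible A \<Longrightarrow> C ** matrix_inv A ** A = C"
  by (metis inv_l matrix_mul_assoc matrix_mul_rid)
lemma mat1_l2: "C ** mat 1 ** A = C ** A"
  by simp

lemma cancel_r: "invertible N \<Longrightarrow> A ** N = B \<Longrightarrow> A = B ** matrix_inv N"
  by (metis inv_r2)
lemma cancel_l: "invertible M \<Longrightarrow> M ** A = B \<Longrightarrow> A = matrix_inv M ** B"
  by (metis inv_l' )

lemma comm_pack:
  fixes S X :: "complex^'n^'n"
  assumes "invertible S" "invertible X" "S ** X = X ** S"
  shows "S ** X = X ** S" "matrix_inv S ** X = X ** matrix_inv S"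
    "S ** matrix_inv X = matrix_inv X ** S" "matrix_inv S ** matrix_inv X = matrix_inv X ** matrix_inv S"
proof -
  show 1: "S ** X = X ** S" by fact
  show 2: "matrix_inv S ** X = X ** matrix_inv S" using comm_inv assms by metis
  show "S ** matrix_inv X = matrix_inv X ** S" using comm_inv[of X S] assms by metis
  show "matrix_inv S ** matrix_inv X = matrix_inv X ** matrix_inv S"
    using comm_inv[of X "matrix_inv S"] 2 assms by metis
qed

lemma comm_pack2:
  fixes S X :: "complex^'n^'n"
  assumes "invertible S" "invertible X" "S ** X = X ** S"
  shows "C ** S ** X = C ** X ** S" "C ** matrix_inv S ** X = C ** X ** matrix_inv S"
    "C ** S ** matrix_inv X = C ** matrix_inv X ** S" "C ** matrix_inv S ** matrix_inv X = C ** matrix_inv X ** matrix_inv S"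
  using comm_pack[OF assms] by (simp_all add: cassoc)



lemma inv_mult:
  fixes A B :: "complex^'n^'n"
  assumes "invertible A" "invertible B"
  shows "matrix_inv (A ** B) = matrix_inv B ** matrix_inv A"
proof (rule inv_unique)
  show "A ** B ** (matrix_inv B ** matrix_inv A) = mat 1"
    by (simp only: matrix_mul_assoc inv_r2[OF assms(2)] inv_r[OF assms(1)])
  show "matrix_inv B ** matrix_inv A ** (A ** B) = mat 1"
    by (simp only: matrix_mul_assoc inv_l2[OF assms(1)] inv_l[OF assms(2)])
qed

lemma invertible_mult':
  fixes A B :: "complex^'n^'n"
  assumes "invertible A" "invertible B" shows "invertible (A ** B)"
  unfolding invertible_def
proof (intro exI conjI)
  show "A ** B ** (matrix_inv B ** matrix_inv A) = mat 1"
    by (simp only: matrix_mul_assoc inv_r2[OF assms(2)] inv_r[OF assms(1)])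
  show "matrix_inv B ** matrix_inv A ** (A ** B) = mat 1"
    by (simp only: matrix_mul_assoc inv_l2[OF assms(1)] inv_l[OF assms(2)])
qed

lemma r2: "A ** B = mat 1 \<Longrightarrow> C ** A ** B = C"
  by (metis matrix_mul_assoc matrix_mul_rid)

locale dpt =
  fixes U :: "complex^'n2::finite^'m1::finite" and Ub :: "complex^'n1::finite^'m2::finite"
    and V :: "complex^'m1^'n1" and Vb :: "complex^'m2^'n2"
    and S :: "complex^'n1^'n1" and Sb :: "complex^'n2^'n2"
    and K :: "complex^'n2^'n1" and Kb :: "complex^'n1^'n2"
    and X :: "complex^'n1^'n1" and Xb :: "complex^'n2^'n2"
    and M Mi :: "complex^'n2^'n2" and N Ni :: "complex^'n1^'n1"
  assumes iS: "invertible S" and iSb: "invertible Sb"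
    and syl1: "matrix_inv S ** K - K ** Sb = V ** U"
    and syl2: "matrix_inv Sb ** Kb - Kb ** S = Vb ** Ub"
    and iX: "invertible X" and iXb: "invertible Xb"
    and cX: "S ** X = X ** S" and cXb: "Sb ** Xb = Xb ** Sb"
    and hM: "M = matrix_inv Xb - Kb ** X ** K"
    and hN: "N = matrix_inv X - K ** Xb ** Kb"
    and Mi1: "M ** Mi = mat 1" and Mi2: "Mi ** M = mat 1"
    and Ni1: "N ** Ni = mat 1" and Ni2: "Ni ** N = mat 1"
begin

lemmas isimps = inv_r[OF iS] inv_l[OF iS] inv_r2[OF iS] inv_l2[OF iS]
  inv_r[OF iSb] inv_l[OF iSb] inv_r2[OF iSb] inv_l2[OF iSb]
  inv_r[OF iX] inv_l[OF iX] inv_r2[OF iX] inv_l2[OF iX]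
  inv_r[OF iXb] inv_l[OF iXb] inv_r2[OF iXb] inv_l2[OF iXb]
  Mi1 Mi2 Ni1 Ni2 r2[OF Mi1] r2[OF Mi2] r2[OF Ni1] r2[OF Ni2]
  comm_pack[OF iS iX cX] comm_pack2[OF iS iX cX] comm_pack[OF iSb iXb cXb] comm_pack2[OF iSb iXb cXb]

lemma iM: "invertible M" using Mi1 Mi2 invertible_def by blast
lemma iN: "invertible N" using Ni1 Ni2 invertible_def by blast
lemma Mi_eq: "Mi = matrix_inv M" using inv_unique[OF Mi1 Mi2] by simp
lemma Ni_eq: "Ni = matrix_inv N" using inv_unique[OF Ni1 Ni2] by simp

lemma NXK: "N ** X ** K = K ** Xb ** M"
  by (simp add: hM hN msimps isimps)
lemma KbXN: "Kb ** X ** N = M ** Xb ** Kb"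
  by (simp add: hM hN msimps isimps)
lemma I1: "Mi ** Kb ** X = Xb ** Kb ** Ni"
proof -
  have "Mi ** Kb ** X = Mi ** (Kb ** X ** N) ** Ni" by (simp add: matrix_mul_assoc isimps)
  also have "\<dots> = Xb ** Kb ** Ni" by (simp add: KbXN matrix_mul_assoc isimps)
  finally show ?thesis .
qed
lemma I2: "X ** K ** Mi = Ni ** K ** Xb"
proof -
  have "X ** K ** Mi = Ni ** (N ** X ** K) ** Mi" by (simp add: matrix_mul_assoc isimps)
  also have "\<dots> = Ni ** K ** Xb" by (simp add: NXK matrix_mul_assoc isimps)
  finally show ?thesis .
qed

abbreviation "Mm \<equiv> matrix_inv Xb ** Sb - Kb ** matrix_inv S ** X ** K"

lemma C1: "X ** K ** Mi ** Mm - matrix_inv S ** X ** K = - (Ni ** V ** U)"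
proof -
  let ?Z = "X ** K ** Mi ** Mm - matrix_inv S ** X ** K"
  have "N ** ?Z = N ** X ** K ** Mi ** Mm - N ** matrix_inv S ** X ** K"
    by (simp add: msimps)
  also have "\<dots> = K ** Xb ** Mm - N ** matrix_inv S ** X ** K"
    by (simp add: NXK isimps)
  also have "\<dots> = K ** Sb - matrix_inv S ** K"
    by (simp add: hN msimps isimps)
  also have "\<dots> = - (V ** U)" using syl1 by (simp add: algebra_simps)
  finally have "N ** ?Z = - (V ** U)" .
  hence "Ni ** (N ** ?Z) = Ni ** (- (V ** U))" by simp
  thus ?thesis by (simp add: msimps isimps)
qed

lemma syl2a: "C ** Vb ** Ub = C ** (matrix_inv Sb ** Kb - Kb ** S)"
  by (simp add: matrix_mul_assoc[symmetric] syl2)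
lemma syl1a: "C ** V ** U = C ** (matrix_inv S ** K - K ** Sb)"
  by (simp add: matrix_mul_assoc[symmetric] syl1)

lemma Mplus: "matrix_inv Xb ** matrix_inv Sb - Kb ** S ** X ** K = matrix_inv Sb ** M + Vb ** Ub ** X ** K"
  by (simp add: hM msimps isimps syl2a flip: syl2)

lemma Mminus: "matrix_inv Sb ** Mm = M - Vb ** Ub ** matrix_inv S ** X ** K"
  by (simp add: hM msimps isimps syl2a flip: syl2)

end



lemma G1abs:
  fixes U :: "complex^'n2::finite^'m1::finite" and Ub :: "complex^'n1::finite^'m2::finite"
    and V :: "complex^'m1^'n1" and Vb :: "complex^'m2^'n2"
  assumes eM1: "M1 = Sbi ** M + Vb ** Ub ** X ** K"
    and eMm: "Sbi ** Mm = M - Vb ** Ub ** Si ** X ** K"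
    and eC: "Ni ** V ** U = - (X ** K ** Mi ** Mm - Si ** X ** K)"
    and h1: "M ** Mi = mat 1" and h2: "M1i ** M1 = mat 1"
  shows "U ** M1i ** Vb ** (mat 1 - Ub ** Ni ** V ** U ** Mi ** Vb) = U ** Mi ** Mm ** Mi ** Vb"
proof -
  have eCa: "C ** Ni ** V ** U = C ** (- (X ** K ** Mi ** Mm - Si ** X ** K))" for C :: "complex^'n1^'m1"
    using arg_cong[OF eC, of "\<lambda>Z. C ** Z"] by (simp only: matrix_mul_assoc)
  have "U ** Mi ** Mm ** Mi ** Vb = U ** M1i ** (M1 ** Mi ** Mm ** Mi ** Vb)"
    by (simp add: matrix_mul_assoc r2[OF h2])
  also have "M1 ** Mi ** Mm ** Mi ** Vb = Sbi ** Mm ** Mi ** Vb + Vb ** Ub ** X ** K ** Mi ** Mm ** Mi ** Vb"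
    by (simp add: eM1 msimps r2[OF h1])
  also have "Sbi ** Mm ** Mi ** Vb = Vb - Vb ** Ub ** Si ** X ** K ** Mi ** Vb"
    by (simp add: eMm msimps r2[OF h1] h1)
  finally have R: "U ** Mi ** Mm ** Mi ** Vb = U ** M1i ** (Vb - Vb ** Ub ** Si ** X ** K ** Mi ** Vb + Vb ** Ub ** X ** K ** Mi ** Mm ** Mi ** Vb)" .
  show ?thesis unfolding R by (simp add: msimps eCa algebra_simps)
qed

lemma G2abs:
  fixes U :: "complex^'n2::finite^'m1::finite" and Ub :: "complex^'n1::finite^'m2::finite"
    and V :: "complex^'m1^'n1" and Vb :: "complex^'m2^'n2"
  assumes eM1: "M1 = Sbi ** M + Vb ** Ub ** X ** K"
    and eC: "N1i ** V ** U = - (X1 ** K ** M1i ** M - X ** K)"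
    and h1: "M ** Mi = mat 1" and h2: "M1i ** M1 = mat 1"
  shows "(mat 1 - U ** M1i ** Vb ** Ub ** N1i ** V) ** (U ** Mi ** Vb)
     = U ** M1i ** Sbi ** Vb + U ** M1i ** Vb ** Ub ** X1 ** K ** M1i ** Vb"
proof -
  have eCa: "C ** N1i ** V ** U = C ** (- (X1 ** K ** M1i ** M - X ** K))" for C :: "complex^'n1^'m1"
    using arg_cong[OF eC, of "\<lambda>Z. C ** Z"] by (simp only: matrix_mul_assoc)
  have "U ** Mi ** Vb = U ** M1i ** (M1 ** Mi ** Vb)"
    by (simp add: matrix_mul_assoc r2[OF h2])
  also have "M1 ** Mi ** Vb = Sbi ** Vb + Vb ** Ub ** X ** K ** Mi ** Vb"
    by (simp add: eM1 msimps r2[OF h1])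
  finally have R: "U ** Mi ** Vb = U ** M1i ** (Sbi ** Vb + Vb ** Ub ** X ** K ** Mi ** Vb)" .
  have L: "(mat 1 - U ** M1i ** Vb ** Ub ** N1i ** V) ** (U ** Mi ** Vb) = U ** Mi ** Vb
     + U ** M1i ** Vb ** Ub ** X1 ** K ** M1i ** Vb - U ** M1i ** Vb ** Ub ** X ** K ** Mi ** Vb"
    by (simp add: msimps eCa r2[OF h1])
  show ?thesis unfolding L by (subst R) (simp add: msimps algebra_simps)
qed

lemma Pabs:
  fixes U :: "complex^'n2::finite^'m1::finite" and Ub :: "complex^'n1::finite^'m2::finite"
    and V :: "complex^'m1^'n1" and Vb :: "complex^'m2^'n2"
  assumes e: "Kb ** X1 ** N - M1 ** Xb ** Kb = - (Vb ** Ub)"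
    and I1T: "M1i ** Kb ** X1 = Xb1 ** Kb ** N1i"
    and h1: "N ** Ni = mat 1" and h2: "M1i ** M1 = mat 1"
  shows "U ** Xb1 ** Kb ** N1i ** V - U ** Xb ** Kb ** Ni ** V = - (U ** M1i ** Vb ** Ub ** Ni ** V)"
proof -
  have "U ** Xb1 ** Kb ** N1i ** V = U ** (M1i ** Kb ** X1) ** N ** Ni ** V"
    by (simp add: I1T matrix_mul_assoc r2[OF h1])
  moreover have "U ** Xb ** Kb ** Ni ** V = U ** M1i ** M1 ** Xb ** Kb ** Ni ** V"
    by (simp add: r2[OF h2])
  ultimately have "U ** Xb1 ** Kb ** N1i ** V - U ** Xb ** Kb ** Ni ** V
     = U ** M1i ** (Kb ** X1 ** N - M1 ** Xb ** Kb) ** Ni ** V"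
    by (simp add: msimps)
  also have "\<dots> = - (U ** M1i ** Vb ** Ub ** Ni ** V)" by (simp add: e msimps)
  finally show ?thesis .
qed

locale dpair = p0: dpt U Ub V Vb S Sb K Kb X Xb M Mi N Ni + p1: dpt U Ub V Vb S Sb K Kb X1 Xb1 M1 M1i N1 N1i
  for U :: "complex^'n2::finite^'m1::finite" and Ub :: "complex^'n1::finite^'m2::finite"
    and V :: "complex^'m1^'n1" and Vb :: "complex^'m2^'n2"
    and S :: "complex^'n1^'n1" and Sb :: "complex^'n2^'n2"
    and K :: "complex^'n2^'n1" and Kb :: "complex^'n1^'n2"
    and X :: "complex^'n1^'n1" and Xb :: "complex^'n2^'n2"
    and M Mi :: "complex^'n2^'n2" and N Ni :: "complex^'n1^'n1"
    and X1 :: "complex^'n1^'n1" and Xb1 :: "complex^'n2^'n2"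
    and M1 M1i :: "complex^'n2^'n2" and N1 N1i :: "complex^'n1^'n1" +
  assumes hX1: "X1 = S ** X" and hXb1: "Xb1 = Sb ** Xb"
begin

lemma invXb1: "matrix_inv Xb1 = matrix_inv Xb ** matrix_inv Sb"
  by (simp add: hXb1 inv_mult p0.iSb p0.iXb)
lemma invX1: "matrix_inv X1 = matrix_inv X ** matrix_inv S"
  by (simp add: hX1 inv_mult p0.iS p0.iX)

lemma M1eq: "M1 = matrix_inv Sb ** M + Vb ** Ub ** X ** K"
  using p0.Mplus by (simp add: p1.hM invXb1 hX1 p0.hM matrix_mul_assoc)

lemma C1pair: "N1i ** V ** U = - (X1 ** K ** M1i ** M - X ** K)"
proof -
  have a: "matrix_inv Xb1 ** Sb - Kb ** matrix_inv S ** X1 ** K = M"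
    by (simp add: invXb1 hX1 p0.hM p0.isimps matrix_mul_assoc)
  have b: "matrix_inv S ** X1 ** K = X ** K"
    by (simp add: hX1 p0.isimps matrix_mul_assoc)
  from p1.C1 show ?thesis unfolding a b by (simp add: algebra_simps)
qed

lemma KeyP: "Kb ** X1 ** N - M1 ** Xb ** Kb = - (Vb ** Ub)"
  by (simp add: p1.hM invXb1 hX1 p0.hN msimps p0.isimps flip: p0.syl2)

lemma G1: "U ** M1i ** Vb ** (mat 1 - Ub ** Ni ** V ** U ** Mi ** Vb) = U ** Mi ** p0.Mm ** Mi ** Vb"
  by (rule G1abs[OF M1eq p0.Mminus _ p0.Mi1 p1.Mi2]) (use arg_cong[OF p0.C1, of uminus] in \<open>simp add: algebra_simps\<close>)

lemma G2: "(mat 1 - U ** M1i ** Vb ** Ub ** N1i ** V) ** (U ** Mi ** Vb)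
     = U ** M1i ** matrix_inv Sb ** Vb + U ** M1i ** Vb ** Ub ** X1 ** K ** M1i ** Vb"
  by (rule G2abs[OF M1eq C1pair p0.Mi1 p1.Mi2])

lemma Pshift: "U ** Xb1 ** Kb ** N1i ** V - U ** Xb ** Kb ** Ni ** V = - (U ** M1i ** Vb ** Ub ** Ni ** V)"
  by (rule Pabs[OF KeyP p1.I1 p0.Ni1 p1.Mi2])

end



lemmas csc = cs_addc cs_diffc cs_negc

context dpt begin
lemma Yid: "Mm + cscale e M + Kb ** X ** V ** U = M ** (Sb + cscale e (mat 1))"
  by (simp add: hM msimps isimps syl1a csc)
lemma I1a: "C ** Xb ** Kb ** Ni = C ** Mi ** Kb ** X"
  using arg_cong[OF I1, of "\<lambda>Z. C ** Z"] by (simp only: matrix_mul_assoc)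
end

locale tpair = p0: dpt U Ub V Vb S Sb K Kb X Xb M Mi N Ni + pT: dpt U Ub V Vb S Sb K Kb XT XbT MT MTi NT NTi
  for U :: "complex^'n2::finite^'m1::finite" and Ub :: "complex^'n1::finite^'m2::finite"
    and V :: "complex^'m1^'n1" and Vb :: "complex^'m2^'n2"
    and S :: "complex^'n1^'n1" and Sb :: "complex^'n2^'n2"
    and K :: "complex^'n2^'n1" and Kb :: "complex^'n1^'n2"
    and X :: "complex^'n1^'n1" and Xb :: "complex^'n2^'n2"
    and M Mi :: "complex^'n2^'n2" and N Ni :: "complex^'n1^'n1"
    and XT :: "complex^'n1^'n1" and XbT :: "complex^'n2^'n2"
    and MT MTi :: "complex^'n2^'n2" and NT NTi :: "complex^'n1^'n1" +
  fixes e :: complex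
  assumes tX: "S ** XT = cscale (1 + e) XT + cscale (1 - e) X - X ** matrix_inv S"
    and tXb: "matrix_inv Sb ** matrix_inv XbT = cscale (1 + e) (matrix_inv XbT) - matrix_inv Xb ** Sb - cscale (e - 1) (matrix_inv Xb)"
begin

lemma tXa: "C ** S ** XT = C ** (cscale (1 + e) XT + cscale (1 - e) X - X ** matrix_inv S)"
  using arg_cong[OF tX, of "\<lambda>Z. C ** Z"] by (simp only: matrix_mul_assoc)
lemma tXba: "C ** matrix_inv Sb ** matrix_inv XbT = C ** (cscale (1 + e) (matrix_inv XbT) - matrix_inv Xb ** Sb - cscale (e - 1) (matrix_inv Xb))"
  using arg_cong[OF tXb, of "\<lambda>Z. C ** Z"] by (simp only: matrix_mul_assoc)

lemma Zid: "matrix_inv Sb ** MT - cscale (1 + e) MT - Kb ** X ** V ** U + Vb ** Ub ** XT ** K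
   = - (M ** (Sb + cscale (e - 1) (mat 1)))"
  by (simp add: pT.hM p0.hM msimps p0.isimps p0.syl1a p0.syl2a tX tXa tXb tXba csc flip: p0.syl2)

lemma full_eq:
  assumes G1T: "qR ** (mat 1 - Ub ** NTi ** V ** U ** MTi ** Vb) = U ** MTi ** pT.Mm ** MTi ** Vb"
    and G2L: "(mat 1 - U ** Mi ** Vb ** Ub ** Ni ** V) ** qL
       = U ** Mi ** matrix_inv Sb ** Vb + U ** Mi ** Vb ** Ub ** X ** K ** Mi ** Vb"
  shows "cscale e (U ** MTi ** Vb - U ** Mi ** Vb) + (qR - U ** MTi ** Vb) - (U ** Mi ** Vb - qL)
     - qR ** (Ub ** NTi ** V) ** (U ** MTi ** Vb) - (U ** Mi ** Vb) ** (Ub ** Ni ** V) ** qL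
     + (U ** XbT ** Kb ** NTi ** V - U ** Xb ** Kb ** Ni ** V) ** (U ** MTi ** Vb)
     + (U ** Mi ** Vb) ** (Ub ** XT ** K ** MTi ** Vb - Ub ** X ** K ** Mi ** Vb) = 0"
    (is "?L = 0")
proof -
  have A: "?L = qR ** (mat 1 - Ub ** NTi ** V ** U ** MTi ** Vb)
     + (mat 1 - U ** Mi ** Vb ** Ub ** Ni ** V) ** qL
     + cscale (e - 1) (U ** MTi ** Vb) - cscale (1 + e) (U ** Mi ** Vb)
     + (U ** XbT ** Kb ** NTi ** V - U ** Xb ** Kb ** Ni ** V) ** (U ** MTi ** Vb)
     + U ** Mi ** Vb ** Ub ** XT ** K ** MTi ** Vb - U ** Mi ** Vb ** Ub ** X ** K ** Mi ** Vb"
    by (simp add: msimps csc algebra_simps)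
  also have "\<dots> = U ** MTi ** (pT.Mm + cscale (e - 1) MT + Kb ** XT ** V ** U) ** MTi ** Vb
     + U ** Mi ** (matrix_inv Sb ** MT - cscale (1 + e) MT - Kb ** X ** V ** U + Vb ** Ub ** XT ** K) ** MTi ** Vb"
    unfolding G1T G2L
    by (simp add: msimps csc algebra_simps p0.I1a pT.I1a pT.isimps(17-24) p0.isimps(17-24))
  also have "\<dots> = 0"
    unfolding pT.Yid Zid by (simp add: msimps pT.isimps(17-24) p0.isimps(17-24))
  finally show ?thesis .
qed

end



context dpt begin

lemma semi_poly:
  assumes ee: "e * e = -1"
  shows "cscale e (- (- (matrix_inv Xb ** (cscale e (omega Sb) ** Xb) ** matrix_inv Xb)
       - Kb ** (- (cscale e (omega S) ** X)) ** K))
     + Mm + matrix_inv Sb ** M + Vb ** Ub ** X ** K - cscale 2 M = 0"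
proof -
  have ee2: "e * (e * c) = - c" for c using ee by (simp add: mult.assoc[symmetric])
  show ?thesis by (simp add: hM omega_def msimps isimps ee ee2 csc syl2a flip: syl2)
qed

lemma semi_eq:
  assumes ee: "e * e = -1"
    and G1x: "qR ** (mat 1 - Ub ** Ni ** V ** U ** Mi ** Vb) = U ** Mi ** Mm ** Mi ** Vb"
    and G2x: "(mat 1 - U ** Mi ** Vb ** Ub ** Ni ** V) ** qL
       = U ** Mi ** matrix_inv Sb ** Vb + U ** Mi ** Vb ** Ub ** X ** K ** Mi ** Vb"
    and qt: "qt = - (U ** Mi ** (- (matrix_inv Xb ** (cscale e (omega Sb) ** Xb) ** matrix_inv Xb)
       - Kb ** (- (cscale e (omega S) ** X)) ** K) ** Mi ** Vb)"
  shows "cscale e qt + qR - cscale 2 (U ** Mi ** Vb) + qL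
     - qR ** (Ub ** Ni ** V) ** (U ** Mi ** Vb) - (U ** Mi ** Vb) ** (Ub ** Ni ** V) ** qL = 0"
    (is "?L = 0")
proof -
  let ?Mt = "- (matrix_inv Xb ** (cscale e (omega Sb) ** Xb) ** matrix_inv Xb)
       - Kb ** (- (cscale e (omega S) ** X)) ** K"
  have "?L = cscale e qt + qR ** (mat 1 - Ub ** Ni ** V ** U ** Mi ** Vb)
     + (mat 1 - U ** Mi ** Vb ** Ub ** Ni ** V) ** qL - cscale 2 (U ** Mi ** Vb)"
    by (simp add: msimps algebra_simps)
  also have "\<dots> = U ** Mi ** (cscale e (- ?Mt) + Mm + matrix_inv Sb ** M + Vb ** Ub ** X ** K - cscale 2 M) ** Mi ** Vb"
    unfolding G1x G2x qt by (simp add: msimps algebra_simps isimps(17-24))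
  also have "\<dots> = 0" by (simp only: semi_poly[OF ee]) simp
  finally show ?thesis .
qed

end



locale cpt =
  fixes U :: "complex^'n2::finite^'m1::finite" and Ub :: "complex^'n1::finite^'m2::finite"
    and V :: "complex^'m1^'n1" and Vb :: "complex^'m2^'n2"
    and S :: "complex^'n1^'n1" and Sb :: "complex^'n2^'n2"
    and K :: "complex^'n2^'n1" and Kb :: "complex^'n1^'n2"
    and X :: "complex^'n1^'n1" and Xb :: "complex^'n2^'n2"
    and M Mi :: "complex^'n2^'n2" and N Ni :: "complex^'n1^'n1"
  assumes syl1: "S ** K + K ** Sb = V ** U"
    and syl2: "Sb ** Kb + Kb ** S = Vb ** Ub"
    and iX: "invertible X" and iXb: "invertible Xb"
    and cX: "S ** X = X ** S" and cXb: "Sb ** Xb = Xb ** Sb"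
    and hM: "M = matrix_inv Xb - Kb ** X ** K"
    and hN: "N = matrix_inv X - K ** Xb ** Kb"
    and Mi1: "M ** Mi = mat 1" and Mi2: "Mi ** M = mat 1"
    and Ni1: "N ** Ni = mat 1" and Ni2: "Ni ** N = mat 1"
begin

lemma cXi: "S ** matrix_inv X = matrix_inv X ** S" using comm_inv[OF iX cX[symmetric]] by simp
lemma cXbi: "Sb ** matrix_inv Xb = matrix_inv Xb ** Sb" using comm_inv[OF iXb cXb[symmetric]] by simp

lemmas isimps = inv_r[OF iX] inv_l[OF iX] inv_r2[OF iX] inv_l2[OF iX]
  inv_r[OF iXb] inv_l[OF iXb] inv_r2[OF iXb] inv_l2[OF iXb]
  Mi1 Mi2 Ni1 Ni2 r2[OF Mi1] r2[OF Mi2] r2[OF Ni1] r2[OF Ni2]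
  cX cassoc[OF cX] cXb cassoc[OF cXb] cXi cassoc[OF cXi] cXbi cassoc[OF cXbi]

lemma syl1a: "C ** V ** U = C ** (S ** K + K ** Sb)"
  using arg_cong[OF syl1, of "\<lambda>Z. C ** Z"] by (simp only: matrix_mul_assoc)
lemma syl2a: "C ** Vb ** Ub = C ** (Sb ** Kb + Kb ** S)"
  using arg_cong[OF syl2, of "\<lambda>Z. C ** Z"] by (simp only: matrix_mul_assoc)

abbreviation "Mx \<equiv> - (matrix_inv Xb ** (- (Sb ** Xb)) ** matrix_inv Xb) - Kb ** (- (S ** X)) ** K"
abbreviation "Mtt e \<equiv> - (matrix_inv Xb ** (cscale e (Sb ** Sb) ** Xb) ** matrix_inv Xb)
     - Kb ** (- (cscale e (S ** S) ** X)) ** K"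

lemma Mx_poly: "Mx = Sb ** M + Vb ** Ub ** X ** K"
  by (simp add: hM msimps isimps syl2a flip: syl2)
lemma Mx_eq: "C ** Mi ** Mx ** Mi = C ** Mi ** Sb + C ** Mi ** Vb ** Ub ** X ** K ** Mi"
  unfolding Mx_poly by (simp add: msimps isimps)

lemma Mx_eq0: "Mi ** Mx ** Mi = Mi ** Sb + Mi ** Vb ** Ub ** X ** K ** Mi"
  unfolding Mx_poly by (simp add: msimps isimps)

lemma Mt_poly: "Mtt e = cscale e (Vb ** Ub ** S ** X ** K - Sb ** Vb ** Ub ** X ** K - Sb ** Sb ** M)"
  by (simp add: hM msimps isimps syl2a flip: syl2)
lemma Mt_eq: "C ** Mi ** Mtt e ** Mi = cscale e (C ** Mi ** Vb ** Ub ** S ** X ** K ** Mi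
    - C ** Mi ** Sb ** Vb ** Ub ** X ** K ** Mi - C ** Mi ** Sb ** Sb)"
  unfolding Mt_poly by (simp add: msimps isimps)

lemma Mt_eq0: "Mi ** Mtt e ** Mi = cscale e (Mi ** Vb ** Ub ** S ** X ** K ** Mi
    - Mi ** Sb ** Vb ** Ub ** X ** K ** Mi - Mi ** Sb ** Sb)"
  unfolding Mt_poly by (simp add: msimps isimps)

lemma NXK: "N ** X ** K = K ** Xb ** M"
  by (simp add: hM hN msimps isimps)
lemma KbXN: "Kb ** X ** N = M ** Xb ** Kb"
  by (simp add: hM hN msimps isimps)
lemma I1: "Mi ** Kb ** X = Xb ** Kb ** Ni"
proof -
  have "Mi ** Kb ** X = Mi ** (Kb ** X ** N) ** Ni" by (simp add: matrix_mul_assoc isimps)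
  also have "\<dots> = Xb ** Kb ** Ni" by (simp add: KbXN matrix_mul_assoc isimps)
  finally show ?thesis .
qed
lemma I2: "X ** K ** Mi = Ni ** K ** Xb"
proof -
  have "X ** K ** Mi = Ni ** (N ** X ** K) ** Mi" by (simp add: matrix_mul_assoc isimps)
  also have "\<dots> = Ni ** K ** Xb" by (simp add: NXK matrix_mul_assoc isimps)
  finally show ?thesis .
qed
lemma I1a: "C ** Xb ** Kb ** Ni = C ** Mi ** Kb ** X"
  using arg_cong[OF I1, of "\<lambda>Z. C ** Z"] by (simp only: matrix_mul_assoc)
lemma I2a: "C ** Ni ** K ** Xb = C ** X ** K ** Mi"
  using arg_cong[OF I2, of "\<lambda>Z. C ** Z"] by (simp only: matrix_mul_assoc)

lemma Ycl: "S ** X ** K ** Mi + X ** K ** Mi ** Sb = Ni ** V ** U ** Mi - Ni ** K ** Xb ** Vb ** Ub ** X ** K ** Mi"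
proof -
  let ?Y = "S ** X ** K ** Mi + X ** K ** Mi ** Sb"
  have "N ** ?Y = N ** X ** K ** Mi ** Sb + N ** S ** X ** K ** Mi" by (simp add: msimps)
  also have "\<dots> = K ** Xb ** Sb + N ** S ** X ** K ** Mi" by (simp add: NXK isimps)
  also have "N ** S ** X ** K = V ** U - K ** Xb ** Vb ** Ub ** X ** K - K ** Sb ** Xb ** M"
    by (simp add: hN hM msimps isimps syl2a flip: syl1 syl2)
  finally have "N ** ?Y = V ** U ** Mi - K ** Xb ** Vb ** Ub ** X ** K ** Mi"
    by (simp add: msimps isimps)
  hence "Ni ** (N ** ?Y) = Ni ** (V ** U ** Mi - K ** Xb ** Vb ** Ub ** X ** K ** Mi)" by simp
  thus ?thesis by (simp add: msimps isimps)
qed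

lemma A1: "Ub ** S ** X ** K ** Mi ** Vb + Ub ** X ** K ** Mi ** Sb ** Vb
   + (Ub ** X ** K ** Mi ** Vb) ** (Ub ** X ** K ** Mi ** Vb) = (Ub ** Ni ** V) ** (U ** Mi ** Vb)"
proof -
  have "Ub ** S ** X ** K ** Mi ** Vb + Ub ** X ** K ** Mi ** Sb ** Vb
     = Ub ** (S ** X ** K ** Mi + X ** K ** Mi ** Sb) ** Vb" by (simp add: msimps)
  also have "\<dots> = Ub ** Ni ** V ** U ** Mi ** Vb - Ub ** Ni ** K ** Xb ** Vb ** Ub ** X ** K ** Mi ** Vb"
    unfolding Ycl by (simp add: msimps)
  also have "\<dots> = Ub ** Ni ** V ** U ** Mi ** Vb - Ub ** X ** K ** Mi ** Vb ** Ub ** X ** K ** Mi ** Vb"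
    by (simp add: I2a)
  finally show ?thesis by (simp add: matrix_mul_assoc algebra_simps)
qed

lemma cs2: "cscale 2 A = 2 * A"
  by (simp add: cscale_def vec_eq_iff)

lemma dq_eq: "- (U ** Mi ** Mx ** Mi ** Vb) = - (U ** Mi ** Sb ** Vb + U ** Mi ** Vb ** (Ub ** X ** K ** Mi ** Vb))"
  by (simp only: Mx_eq) (simp add: msimps)

lemma cont_eq:
  assumes ee: "e * e = -1"
  shows "cscale e (- (U ** Mi ** Mtt e ** Mi ** Vb))
    + (- (U ** (- (Mi ** Mx ** Mi)) ** Sb ** Vb + U ** (- (Mi ** Mx ** Mi)) ** Vb ** (Ub ** X ** K ** Mi ** Vb)
          + U ** Mi ** Vb ** (Ub ** (- (S ** X)) ** K ** Mi ** Vb + Ub ** X ** K ** (- (Mi ** Mx ** Mi)) ** Vb)))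
    - cscale 2 ((U ** Mi ** Vb) ** (Ub ** Ni ** V) ** (U ** Mi ** Vb)) = 0"
proof -
  have ee2: "e * (e * c) = - c" for c using ee by (simp add: mult.assoc[symmetric])
  have "cscale e (- (U ** Mi ** Mtt e ** Mi ** Vb))
    + (- (U ** (- (Mi ** Mx ** Mi)) ** Sb ** Vb + U ** (- (Mi ** Mx ** Mi)) ** Vb ** (Ub ** X ** K ** Mi ** Vb)
          + U ** Mi ** Vb ** (Ub ** (- (S ** X)) ** K ** Mi ** Vb + Ub ** X ** K ** (- (Mi ** Mx ** Mi)) ** Vb)))
    - cscale 2 ((U ** Mi ** Vb) ** (Ub ** Ni ** V) ** (U ** Mi ** Vb))
    = cscale 2 ((U ** Mi ** Vb) ** (Ub ** S ** X ** K ** Mi ** Vb + Ub ** X ** K ** Mi ** Sb ** Vb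
   + (Ub ** X ** K ** Mi ** Vb) ** (Ub ** X ** K ** Mi ** Vb) - (Ub ** Ni ** V) ** (U ** Mi ** Vb)))"
    apply (simp only: Mx_eq0 Mt_eq)
    by (simp add: msimps ee ee2 csc algebra_simps isimps cs2)
  also have "\<dots> = 0" by (simp add: A1)
  finally show ?thesis .
qed

lemma Ni_form: "Ni = X + X ** K ** Mi ** Kb ** X"
proof -
  have "N ** (X + X ** K ** Mi ** Kb ** X) = mat 1"
    by (simp add: msimps NXK isimps) (simp add: hN hM msimps isimps)
  hence "Ni ** (N ** (X + X ** K ** Mi ** Kb ** X)) = Ni" by simp
  thus ?thesis by (simp add: matrix_mul_assoc isimps)
qed

lemma p_form: "U ** Xb ** Kb ** Ni ** V = U ** Mi ** Kb ** X ** V"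
  by (simp add: I1a)

lemma dp_eq: "U ** (- (Mi ** Mx ** Mi)) ** Kb ** X ** V + U ** Mi ** Kb ** (- (S ** X)) ** V
   = - ((U ** Mi ** Vb) ** (Ub ** Ni ** V))"
proof -
  have "U ** (- (Mi ** Mx ** Mi)) ** Kb ** X ** V + U ** Mi ** Kb ** (- (S ** X)) ** V
     = - (U ** Mi ** (Sb ** Kb + Kb ** S) ** X ** V) - U ** Mi ** Vb ** Ub ** X ** K ** Mi ** Kb ** X ** V"
    apply (simp only: Mx_eq0)
    by (simp add: msimps isimps algebra_simps)
  also have "\<dots> = - (U ** Mi ** Vb ** Ub ** (X + X ** K ** Mi ** Kb ** X) ** V)"
    by (simp add: msimps syl2a)
  also have "\<dots> = - ((U ** Mi ** Vb) ** (Ub ** Ni ** V))"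
    by (simp add: Ni_form[symmetric] matrix_mul_assoc)
  finally show ?thesis .
qed

end



typedef (overloaded) 'n op = "UNIV :: ((complex^'n::finite) \<Rightarrow>\<^sub>L (complex^'n)) set" by simp

setup_lifting type_definition_op

instantiation op :: (finite) real_normed_algebra_1
begin
lift_definition norm_op :: "'a op \<Rightarrow> real" is norm .
lift_definition minus_op :: "'a op \<Rightarrow> 'a op \<Rightarrow> 'a op" is "(-)" .
lift_definition plus_op :: "'a op \<Rightarrow> 'a op \<Rightarrow> 'a op" is "(+)" .
lift_definition uminus_op :: "'a op \<Rightarrow> 'a op" is "uminus" .
lift_definition zero_op :: "'a op" is "0" .
lift_definition one_op :: "'a op" is "id_blinfun" .
lift_definition times_op :: "'a op \<Rightarrow> 'a op \<Rightarrow> 'a op" is "(o\<^sub>L)" .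
lift_definition scaleR_op :: "real \<Rightarrow> 'a op \<Rightarrow> 'a op" is "scaleR" .
definition dist_op :: "'a op \<Rightarrow> 'a op \<Rightarrow> real" where "dist_op a b = norm (a - b)"
definition uniformity_op :: "('a op \<times> 'a op) filter" where
  "uniformity_op = (INF e\<in>{0 <..}. principal {(x, y). dist x y < e})"
definition open_op :: "'a op set \<Rightarrow> bool"
  where "open_op S = (\<forall>x\<in>S. \<forall>\<^sub>F (x', y) in uniformity. x' = x \<longrightarrow> y \<in> S)"
definition sgn_op :: "'a op \<Rightarrow> 'a op" where "sgn_op x = scaleR (inverse (norm x)) x"

instance
proof
  fix a b c :: "'a op" and r s :: real
  show "a + b + c = a + (b + c)" by transfer (simp add: algebra_simps)
  show "a + b = b + a" by transfer (simp add: algebra_simps)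
  show "0 + a = a" by transfer simp
  show "- a + a = 0" by transfer simp
  show "a - b = a + - b" by transfer simp
  show "r *\<^sub>R (a + b) = r *\<^sub>R a + r *\<^sub>R b" by transfer (simp add: algebra_simps)
  show "(r + s) *\<^sub>R a = r *\<^sub>R a + s *\<^sub>R a" by transfer (simp add: algebra_simps)
  show "r *\<^sub>R s *\<^sub>R a = (r * s) *\<^sub>R a" by transfer simp
  show "1 *\<^sub>R a = a" by transfer simp
  show "dist a b = norm (a - b)" by (simp add: dist_op_def)
  show "sgn a = inverse (norm a) *\<^sub>R a" by (simp add: sgn_op_def)
  show "(norm a = 0) = (a = 0)" by transfer simp
  show "norm (a + b) \<le> norm a + norm b" by transfer (rule norm_triangle_ineq)
  show "norm (r *\<^sub>R a) = \<bar>r\<bar> * norm a" by transfer simp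
  show "a * b * c = a * (b * c)" by transfer (auto intro!: blinfun_eqI)
  show "1 * a = a" by transfer (auto intro!: blinfun_eqI)
  show "a * 1 = a" by transfer (auto intro!: blinfun_eqI)
  show "(a + b) * c = a * c + b * c" by transfer (auto intro!: blinfun_eqI simp: blinfun.bilinear_simps)
  show "a * (b + c) = a * b + a * c" by transfer (auto intro!: blinfun_eqI simp: blinfun.bilinear_simps)
  show "(0::'a op) \<noteq> 1"
  proof transfer
    have "blinfun_apply (id_blinfun :: (complex^'a) \<Rightarrow>\<^sub>L (complex^'a)) 1 \<noteq> blinfun_apply 0 1" by (simp add: vec_eq_iff)
    thus "(0::(complex^'a) \<Rightarrow>\<^sub>L (complex^'a)) \<noteq> id_blinfun" by metis
  qed
  show "r *\<^sub>R a * b = r *\<^sub>R (a * b)" by transfer (auto intro!: blinfun_eqI simp: blinfun.bilinear_simps)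
  show "a * r *\<^sub>R b = r *\<^sub>R (a * b)" by transfer (auto intro!: blinfun_eqI simp: blinfun.bilinear_simps)
  show "norm (a * b) \<le> norm a * norm b" by transfer (rule norm_blinfun_compose)
  show "norm (1::'a op) = 1" by transfer simp
  show "uniformity = (INF e\<in>{0 <..}. principal {(x, y). dist x y < (e::real)} :: ('a op \<times> 'a op) filter)"
    by (simp add: uniformity_op_def)
  fix U :: "'a op set"
  show "open U = (\<forall>x\<in>U. \<forall>\<^sub>F (x', y) in uniformity. x' = x \<longrightarrow> y \<in> U)"
    by (simp add: open_op_def)
qed
end

lemma dist_op_rep: "dist a b = dist (Rep_op a) (Rep_op b)"
  unfolding dist_op_def dist_norm by transfer simp

instance op :: (finite) banach
proof
  fix X :: "nat \<Rightarrow> 'a op"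
  assume "Cauchy X"
  hence "Cauchy (\<lambda>n. Rep_op (X n))" unfolding Cauchy_def dist_op_rep .
  then obtain L where L: "(\<lambda>n. Rep_op (X n)) \<longlonglongrightarrow> L" using convergent_def Cauchy_convergent_iff by blast
  have "X \<longlonglongrightarrow> Abs_op L"
    using L unfolding lim_sequentially dist_op_rep by (simp add: Abs_op_inverse)
  thus "convergent X" by (auto simp: convergent_def)
qed



lemma norm_axis_c: "norm (axis j (1::complex)) = 1"
proof -
  have "(\<Sum>i\<in>UNIV. (norm (axis j (1::complex) $ i))^2) = (\<Sum>i\<in>UNIV. if i = j then 1 else 0)"
    by (rule sum.cong) (auto simp: axis_def)
  thus ?thesis by (simp add: norm_vec_def L2_set_def)
qed

lemma norm_le_sum_vec: "norm (x::'a::real_normed_vector^'n::finite) \<le> (\<Sum>i\<in>UNIV. norm (x $ i))"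
  unfolding norm_vec_def by (rule L2_set_le_sum) simp

lemma bl_mv: "bounded_linear (\<lambda>v::complex^'n::finite. (A::complex^'n^'n) *v v)"
  by (simp add: linear_conv_bounded_linear)

definition phi :: "complex^'n::finite^'n \<Rightarrow> 'n op" where
  "phi A = Abs_op (Blinfun (\<lambda>v. A *v v))"
definition psi :: "'n::finite op \<Rightarrow> complex^'n^'n" where
  "psi L = (\<chi> i j. (blinfun_apply (Rep_op L) (axis j 1)) $ i)"

lemma Rep_phi: "blinfun_apply (Rep_op (phi A)) = (\<lambda>v. A *v v)"
  by (simp add: phi_def Abs_op_inverse bounded_linear_Blinfun_apply bl_mv)

lemma mv_axis: "((A::complex^'n::finite^'m) *v axis j 1) $ i = A $ i $ j"
  by (simp add: matrix_vector_mult_def axis_def if_distrib cong: if_cong)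

lemma psi_phi[simp]: "psi (phi A) = A"
  by (simp add: psi_def Rep_phi mv_axis vec_eq_iff)

lemma phi_inj: "phi A = phi B \<Longrightarrow> A = B"
  by (metis psi_phi)

lemma op_eqI: "(\<And>v. blinfun_apply (Rep_op a) v = blinfun_apply (Rep_op b) v) \<Longrightarrow> a = b"
  by (metis Rep_op_inject blinfun_eqI)

lemma phi_mult: "phi (A ** B) = phi A * phi B"
  by (rule op_eqI) (simp add: times_op.rep_eq Rep_phi matrix_vector_mul_assoc)
lemma phi_one: "phi (mat 1) = 1"
  by (rule op_eqI) (simp add: one_op.rep_eq Rep_phi)
lemma phi_add: "phi (A + B) = phi A + phi B"
  by (rule op_eqI) (simp add: plus_op.rep_eq Rep_phi matrix_vector_mult_add_rdistrib blinfun.bilinear_simps)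
lemma phi_minus: "phi (- A) = - phi A"
  by (rule op_eqI) (simp add: uminus_op.rep_eq Rep_phi matrix_vector_mult_def vec_eq_iff sum_negf blinfun.bilinear_simps)
lemma phi_scaleR: "phi (r *\<^sub>R A) = r *\<^sub>R phi A"
  by (rule op_eqI) (simp add: scaleR_op.rep_eq Rep_phi matrix_vector_mult_def vec_eq_iff scaleR_sum_right blinfun.bilinear_simps)

lemma linear_phi: "linear phi"
  by (rule linearI) (simp_all add: phi_add phi_scaleR)
lemma bl_phi: "bounded_linear (phi :: complex^'n::finite^'n \<Rightarrow> 'n op)"
  using linear_phi by (simp add: linear_conv_bounded_linear)

lemma bl_psi: "bounded_linear (psi :: 'n::finite op \<Rightarrow> complex^'n^'n)"
proof -
  have e: "bounded_linear (\<lambda>L::'n op. blinfun_apply (Rep_op L) (axis j 1) $ i)" for i j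
  proof -
    have b1: "bounded_linear (Rep_op :: 'n op \<Rightarrow> _)"
      by (rule bounded_linear_intro[of _ 1]) (simp_all add: plus_op.rep_eq scaleR_op.rep_eq norm_op.rep_eq)
    have b2: "bounded_linear (\<lambda>F::(complex^'n) \<Rightarrow>\<^sub>L (complex^'n). blinfun_apply F (axis j 1))"
      by (rule blinfun.bounded_linear_left)
    show ?thesis
      using bounded_linear_compose[OF bounded_linear_vec_nth[of i] bounded_linear_compose[OF b2 b1]]
      by (simp add: o_def)
  qed
  have "linear (psi :: 'n op \<Rightarrow> complex^'n^'n)"
  proof (rule linearI)
    fix a b :: "'n op" and r
    show "psi (a + b) = psi a + psi b"
      by (simp add: psi_def plus_op.rep_eq vec_eq_iff blinfun.bilinear_simps)
    show "psi (r *\<^sub>R a) = r *\<^sub>R psi a"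
      by (simp add: psi_def scaleR_op.rep_eq vec_eq_iff blinfun.bilinear_simps)
  qed
  moreover have "\<exists>K. \<forall>x::'n op. norm (psi x) \<le> norm x * K"
  proof -
    have K: "norm (blinfun_apply (Rep_op x) (axis j 1) $ i) \<le> norm x * 1" for x i j
    proof -
      have "norm (blinfun_apply (Rep_op x) (axis j 1) $ i) \<le> norm (blinfun_apply (Rep_op x) (axis j 1))"
        by (rule Finite_Cartesian_Product.norm_nth_le)
      also have "\<dots> \<le> norm (Rep_op x) * norm (axis j (1::complex))" by (rule norm_blinfun)
      finally show ?thesis by (simp add: norm_op.rep_eq norm_axis_c)
    qed
    have "norm (psi x) \<le> norm x * (\<Sum>i\<in>(UNIV::'n set). \<Sum>j\<in>(UNIV::'n set). 1)" for x :: "'n op"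
    proof -
      have "norm (psi x) \<le> (\<Sum>i\<in>UNIV. norm (psi x $ i))" by (rule norm_le_sum_vec)
      also have "\<dots> \<le> (\<Sum>i\<in>UNIV. \<Sum>j\<in>UNIV. norm (psi x $ i $ j))"
        by (rule sum_mono) (rule norm_le_sum_vec)
      also have "\<dots> \<le> (\<Sum>i\<in>(UNIV::'n set). \<Sum>j\<in>(UNIV::'n set). norm x * 1)"
      proof (rule sum_mono, rule sum_mono)
        fix i j
        show "norm (psi x $ i $ j) \<le> norm x * 1" using K[of x j i] by (simp add: psi_def)
      qed
      finally show ?thesis by (simp add: sum_distrib_left mult_ac)
    qed
    thus ?thesis by blast
  qed
  ultimately show ?thesis unfolding bounded_linear_def bounded_linear_axioms_def by blast
qed

lemma psi_phi_mult: "psi (phi A * L) = A ** psi L"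
  by (simp add: psi_def times_op.rep_eq Rep_phi matrix_matrix_mult_def matrix_vector_mult_def vec_eq_iff)

lemma phi_mpow: "phi A ^ k = phi (mpow A k)"
  by (induct k) (simp_all add: phi_one phi_mult)

lemma closed_range_phi: "closed {L::'n::finite op. phi (psi L) = L}"
proof (rule closed_Collect_eq)
  show "continuous_on UNIV (\<lambda>L::'n op. phi (psi L))"
    by (intro linear_continuous_on bounded_linear_compose[OF bl_phi bl_psi, unfolded o_def])
qed (simp add: continuous_on_id)

lemma exp_in_range: "phi (psi (exp (phi A))) = exp (phi A)"
proof -
  have lim: "(\<lambda>n. \<Sum>k<n. phi A ^ k /\<^sub>R fact k) \<longlonglongrightarrow> exp (phi A)"
    unfolding exp_def using summable_exp_generic[of "phi A"] by (simp add: summable_LIMSEQ)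
  have inS: "(\<Sum>k<n. phi A ^ k /\<^sub>R fact k) \<in> {L. phi (psi L) = L}" for n
  proof -
    have "(\<Sum>k<n. phi A ^ k /\<^sub>R fact k) = phi (\<Sum>k<n. mpow A k /\<^sub>R fact k)"
      by (simp add: phi_mpow linear_sum[OF linear_phi] phi_scaleR)
    thus ?thesis by simp
  qed
  have "exp (phi A) \<in> {L. phi (psi L) = L}"
    by (rule closed_sequentially[OF closed_range_phi inS lim])
  thus ?thesis by simp
qed

lemma mexp_psi: "mexp A = psi (exp (phi A))"
proof -
  have ent: "psi (exp (phi A)) $ i $ j = (\<Sum>k. mpow A k $ i $ j / of_nat (fact k))" for i j
  proof -
    have bl: "bounded_linear (\<lambda>L. psi L $ i $ j)"
      using bounded_linear_compose[OF bounded_linear_vec_nth[of j] bounded_linear_compose[OF bounded_linear_vec_nth[of i] bl_psi]]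
      by (simp add: o_def)
    have "psi (exp (phi A)) $ i $ j = (\<Sum>k. psi (phi A ^ k /\<^sub>R fact k) $ i $ j)"
      unfolding exp_def using bounded_linear.suminf[OF bl summable_exp_generic] by simp
    also have "\<dots> = (\<Sum>k. mpow A k $ i $ j / of_nat (fact k))"
    proof -
      have "psi (phi A ^ k /\<^sub>R fact k) = mpow A k /\<^sub>R fact k" for k
        by (simp add: phi_mpow phi_scaleR[symmetric])
      moreover have "(mpow A k /\<^sub>R fact k) $ i $ j = mpow A k $ i $ j / of_nat (fact k)" for k
        by (simp only: vector_scaleR_component) (simp add: scaleR_conv_of_real divide_inverse mult.commute)
      ultimately show ?thesis by simp
    qed
    finally show ?thesis .
  qed
  show ?thesis by (simp add: mexp_def vec_eq_iff ent)
qed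

lemma phi_mexp: "phi (mexp A) = exp (phi A)"
  by (simp add: mexp_psi exp_in_range)

lemma exp_commute_gen: "(x::'a::{real_normed_algebra_1,banach}) * y = y * x \<Longrightarrow> exp x * y = y * exp x"
  by (simp add: exp_def suminf_mult[symmetric] summable_exp_generic power_commuting_commutes suminf_mult2)

lemma mexp_comm: "C ** D = D ** C \<Longrightarrow> mexp C ** D = D ** mexp C"
proof (rule phi_inj)
  assume "C ** D = D ** C"
  hence c: "phi C * phi D = phi D * phi C" by (metis phi_mult)
  have "phi (mexp C ** D) = exp (phi C) * phi D" by (simp add: phi_mult phi_mexp)
  also have "\<dots> = phi D * exp (phi C)" by (rule exp_commute_gen[OF c])
  also have "\<dots> = phi (D ** mexp C)" by (simp add: phi_mult phi_mexp)
  finally show "phi (mexp C ** D) = phi (D ** mexp C)" .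
qed

lemma mexp_inv: "mexp C ** mexp (- C) = mat 1" "mexp (- C) ** mexp C = mat 1"
  by (rule phi_inj, simp add: phi_mult phi_mexp phi_minus phi_one exp_minus_inverse)+
    (simp add: exp_minus_inverse[of "- phi C", simplified])

lemma invertible_mexp: "invertible (mexp C)"
  using mexp_inv invertible_def by blast

lemma mexp_deriv:
  assumes "A ** B = B ** A"
  shows "((\<lambda>y. mexp (y *\<^sub>R A + B)) has_vector_derivative A ** mexp (y *\<^sub>R A + B)) (at y)"
proof -
  have c: "phi A * phi B = phi B * phi A" using assms by (simp flip: phi_mult)
  have c2: "(s *\<^sub>R phi A) * phi B = phi B * (s *\<^sub>R phi A)" for s using c by simp
  have eq: "mexp (s *\<^sub>R A + B) = psi (exp (s *\<^sub>R phi A) * exp (phi B))" for s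
    by (simp add: mexp_psi phi_add phi_scaleR exp_add_commuting[OF c2])
  have d: "((\<lambda>s. exp (s *\<^sub>R phi A) * exp (phi B)) has_vector_derivative (phi A * exp (y *\<^sub>R phi A)) * exp (phi B)) (at y)"
    by (rule bounded_linear.has_vector_derivative[OF bounded_linear_mult_left exp_scaleR_has_vector_derivative_left])
  have "((\<lambda>s. psi (exp (s *\<^sub>R phi A) * exp (phi B))) has_vector_derivative psi ((phi A * exp (y *\<^sub>R phi A)) * exp (phi B))) (at y)"
    by (rule bounded_linear.has_vector_derivative[OF bl_psi d])
  moreover have "psi ((phi A * exp (y *\<^sub>R phi A)) * exp (phi B)) = A ** mexp (y *\<^sub>R A + B)"
    by (simp add: eq mult.assoc psi_phi_mult)
  ultimately show ?thesis by (simp add: eq)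
qed



lemma bb_mm: "bounded_bilinear (\<lambda>(A::complex^'n::finite^'m::finite) (B::complex^'p::finite^'n). A ** B)"
proof -
  have "bilinear (\<lambda>(A::complex^'n::finite^'m::finite) (B::complex^'p::finite^'n). A ** B)"
    unfolding bilinear_def
  proof (intro conjI allI)
    fix A :: "complex^'n^'m" and B :: "complex^'p^'n"
    show "linear (\<lambda>B::complex^'p^'n. A ** B)"
      by (rule linearI) (simp_all add: matrix_add_ldistrib matrix_scalar_ac scalar_matrix_assoc)
    show "linear (\<lambda>A::complex^'n^'m. A ** B)"
      by (rule linearI) (simp_all add: mm_add_r scalar_matrix_assoc)
  qed
  thus ?thesis by (simp add: bilinear_conv_bounded_bilinear)
qed

lemma hvd_mm:
  assumes "(f has_vector_derivative f') (at x)" "(g has_vector_derivative g') (at x)"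
  shows "((\<lambda>y. (f y :: complex^'n::finite^'m::finite) ** (g y :: complex^'p::finite^'n)) has_vector_derivative (f x ** g' + f' ** g x)) (at x)"
  using bounded_bilinear.has_vector_derivative[OF bb_mm assms] .

lemma hvd_lmul:
  assumes "(g has_vector_derivative g') (at x)"
  shows "((\<lambda>y. (A :: complex^'n::finite^'m::finite) ** (g y :: complex^'p::finite^'n)) has_vector_derivative (A ** g')) (at x)"
  using hvd_mm[OF has_vector_derivative_const assms, of A] by simp

lemma hvd_rmul:
  assumes "(f has_vector_derivative f') (at x)"
  shows "((\<lambda>y. (f y :: complex^'n::finite^'m::finite) ** (B :: complex^'p::finite^'n)) has_vector_derivative (f' ** B)) (at x)"
  using hvd_mm[OF assms has_vector_derivative_const, of B] by simp

lemma linear_axis: "linear (\<lambda>c::'a::real_vector. axis i c :: 'a^'n::finite)"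
  by (rule linearI) (simp_all add: axis_def vec_eq_iff)

lemma vec_sum_axis: "(x::'a::real_vector^'n::finite) = (\<Sum>i\<in>UNIV. axis i (x $ i))"
  by (simp add: vec_eq_iff axis_def sum_component if_distrib cong: if_cong)

lemma hvd_vec:
  fixes f :: "real \<Rightarrow> 'a::euclidean_space^'n::finite"
  assumes "\<And>i. ((\<lambda>y. f y $ i) has_vector_derivative f' $ i) (at x)"
  shows "(f has_vector_derivative f') (at x)"
proof -
  have bl: "bounded_linear (\<lambda>c::'a. axis i c :: 'a^'n)" for i
    by (rule linear_conv_bounded_linear[THEN iffD1, OF linear_axis])
  have "((\<lambda>y. \<Sum>i\<in>UNIV. axis i (f y $ i)) has_vector_derivative (\<Sum>i\<in>UNIV. axis i (f' $ i))) (at x)"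
    by (intro has_vector_derivative_sum bounded_linear.has_vector_derivative[OF bl assms])
  thus ?thesis by (simp flip: vec_sum_axis)
qed

lemma diff_vec:
  fixes f :: "real \<Rightarrow> 'a::euclidean_space^'n::finite"
  assumes "\<And>i. (\<lambda>y. f y $ i) differentiable (at x)"
  shows "f differentiable (at x)"
proof -
  have "((\<lambda>y. f y $ i) has_vector_derivative (\<chi> i. vector_derivative (\<lambda>y. f y $ i) (at x)) $ i) (at x)" for i
    using assms[of i] by (simp add: vector_derivative_works)
  thus ?thesis by (intro differentiableI_vector hvd_vec)
qed

lemma diff_nth:
  fixes f :: "real \<Rightarrow> 'a::real_normed_vector^'n::finite"
  assumes "f differentiable (at x)" shows "(\<lambda>y. f y $ i) differentiable (at x)"
proof -
  from assms have "(f has_vector_derivative vector_derivative f (at x)) (at x)" by (simp add: vector_derivative_works)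
  hence "((\<lambda>y. f y $ i) has_vector_derivative (vector_derivative f (at x)) $ i) (at x)"
    by (rule bounded_linear.has_vector_derivative[OF bounded_linear_vec_nth])
  thus ?thesis by (rule differentiableI_vector)
qed

lemma differentiable_prod':
  fixes f :: "'i \<Rightarrow> real \<Rightarrow> complex"
  assumes "\<And>i. i \<in> I \<Longrightarrow> f i differentiable (at x)"
  shows "(\<lambda>y. \<Prod>i\<in>I. f i y) differentiable (at x)"
proof -
  from assms obtain D where "\<And>i. i \<in> I \<Longrightarrow> (f i has_derivative D i) (at x)"
    unfolding differentiable_def by metis
  thus ?thesis unfolding differentiable_def by (blast intro: has_derivative_prod)
qed

lemma det_diff:
  fixes F :: "real \<Rightarrow> complex^'n::finite^'n"
  assumes "\<And>i j. (\<lambda>y. F y $ i $ j) differentiable (at x)"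
  shows "(\<lambda>y. det (F y)) differentiable (at x)"
  unfolding det_def
  by (intro differentiable_sum ballI differentiable_mult differentiable_const differentiable_prod' assms) simp

lemma cramer_inv:
  fixes A :: "complex^'n::finite^'n"
  assumes "det A \<noteq> 0"
  shows "matrix_inv A = (\<chi> k j. det (\<chi> i l. if l = k then axis j 1 $ i else A $ i $ l) / det A)"
proof -
  have iA: "invertible A" using assms invertible_det_nz by blast
  have "(matrix_inv A) $ k $ j = det (\<chi> i l. if l = k then axis j 1 $ i else A $ i $ l) / det A" for k j
  proof -
    let ?x = "\<chi> k. matrix_inv A $ k $ j"
    have "A *v ?x = axis j 1"
    proof -
      have "A *v ?x = (A ** matrix_inv A) *v axis j 1"
        by (simp add: matrix_vector_mult_def matrix_matrix_mult_def vec_eq_iff axis_def sum_distrib_left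
          if_distrib cong: if_cong)
      thus ?thesis by (simp add: inv_r[OF iA])
    qed
    hence "?x = (\<chi> k. det (\<chi> i l. if l = k then axis j 1 $ i else A $ i $ l) / det A)"
      using cramer[OF assms] by blast
    thus ?thesis by (simp add: vec_eq_iff)
  qed
  thus ?thesis by (simp add: vec_eq_iff)
qed

lemma inv_hvd:
  fixes f :: "real \<Rightarrow> complex^'n::finite^'n"
  assumes fd: "(f has_vector_derivative f') (at x)" and inv: "invertible (f x)"
  shows "((\<lambda>y. matrix_inv (f y)) has_vector_derivative - (matrix_inv (f x) ** f' ** matrix_inv (f x))) (at x)"
    and "eventually (\<lambda>y. invertible (f y)) (nhds x)"
proof -
  have fdiff: "f differentiable (at x)" using fd by (rule differentiableI_vector)
  have ent: "(\<lambda>y. f y $ i $ j) differentiable (at x)" for i j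
    by (intro diff_nth fdiff)
  have dd: "(\<lambda>y. det (f y)) differentiable (at x)" by (rule det_diff[OF ent])
  have d0: "det (f x) \<noteq> 0" using inv invertible_det_nz by blast
  have "isCont (\<lambda>y. det (f y)) x" using dd differentiable_imp_continuous_within by blast
  hence "((\<lambda>y. det (f y)) \<longlongrightarrow> det (f x)) (nhds x)"
    using tendsto_at_iff_tendsto_nhds[of "\<lambda>y. det (f y)" x] by (simp add: isCont_def)
  hence ev: "eventually (\<lambda>y. det (f y) \<noteq> 0) (nhds x)"
    using tendsto_imp_eventually_ne d0 by blast
  thus ev_inv: "eventually (\<lambda>y. invertible (f y)) (nhds x)"
    by (rule eventually_mono) (simp add: invertible_det_nz)
  define h where "h y = (\<chi> k j. det (\<chi> i l. if l = k then axis j 1 $ i else f y $ i $ l) / det (f y))" for y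
  have gh: "eventually (\<lambda>y. matrix_inv (f y) = h y) (nhds x)"
    using ev by (rule eventually_mono) (simp add: h_def cramer_inv)
  have hdiff: "h differentiable (at x)"
    unfolding h_def
  proof (intro diff_vec)
    fix k j
    show "(\<lambda>y. (\<chi> k j. det (\<chi> i l. if l = k then axis j 1 $ i else f y $ i $ l) / det (f y)) $ k $ j) differentiable (at x)"
      apply simp
      apply (rule differentiable_divide[OF det_diff dd d0])
      subgoal for i' j' by (cases "j' = k") (simp_all add: ent)
      done
  qed
  let ?g' = "vector_derivative h (at x)"
  have hd: "(h has_vector_derivative ?g') (at x)" using hdiff by (simp add: vector_derivative_works)
  have gd: "((\<lambda>y. matrix_inv (f y)) has_vector_derivative ?g') (at x)"
    using has_vector_derivative_cong_ev[where f="\<lambda>y. matrix_inv (f y)" and g=h and x=x and S=UNIV and f'="?g'"] gh hd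
      eventually_nhds_x_imp_x[OF gh]
    by (simp add: eventually_mono)
  have pd: "((\<lambda>y. f y ** matrix_inv (f y)) has_vector_derivative (f x ** ?g' + f' ** matrix_inv (f x))) (at x)"
    by (rule hvd_mm[OF fd gd])
  have ev1: "eventually (\<lambda>y. f y ** matrix_inv (f y) = mat 1) (nhds x)"
    using ev_inv by (rule eventually_mono) (simp add: inv_r)
  have "((\<lambda>y. mat 1) has_vector_derivative (f x ** ?g' + f' ** matrix_inv (f x))) (at x)"
    using has_vector_derivative_cong_ev[where f="\<lambda>y. f y ** matrix_inv (f y)" and g="\<lambda>y. mat 1" and x=x and S=UNIV] pd ev1
      eventually_nhds_x_imp_x[OF ev1]
    by (simp add: eventually_mono)
  hence z: "f x ** ?g' + f' ** matrix_inv (f x) = 0"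
    using vector_derivative_unique_at has_vector_derivative_const by metis
  have "?g' = matrix_inv (f x) ** (f x ** ?g')" by (simp add: matrix_mul_assoc inv_l[OF inv])
  also have "f x ** ?g' = - (f' ** matrix_inv (f x))" using z by (simp add: eq_neg_iff_add_eq_0)
  finally have "?g' = - (matrix_inv (f x) ** f' ** matrix_inv (f x))" by (simp add: mm_neg_r matrix_mul_assoc)
  with gd show "((\<lambda>y. matrix_inv (f y)) has_vector_derivative - (matrix_inv (f x) ** f' ** matrix_inv (f x))) (at x)"
    by simp
qed



locale ccase =
  fixes U :: "complex^'n2::finite^'m1::finite" and Ub :: "complex^'n1::finite^'m2::finite"
    and V :: "complex^'m1^'n1" and Vb :: "complex^'m2^'n2"
    and S :: "complex^'n1^'n1" and Sb :: "complex^'n2^'n2"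
    and K :: "complex^'n2^'n1" and Kb :: "complex^'n1^'n2"
    and X :: "real \<Rightarrow> real \<Rightarrow> complex^'n1^'n1" and Xb :: "real \<Rightarrow> real \<Rightarrow> complex^'n2^'n2"
    and e :: complex
  assumes syl1: "S ** K + K ** Sb = V ** U"
    and syl2: "Sb ** Kb + Kb ** S = Vb ** Ub"
    and ee: "e * e = -1"
    and dX: "\<And>y t. ((\<lambda>y. X y t) has_vector_derivative - (S ** X y t)) (at y)"
    and dXb: "\<And>y t. ((\<lambda>y. Xb y t) has_vector_derivative - (Sb ** Xb y t)) (at y)"
    and tX: "\<And>y t. ((\<lambda>t. X y t) has_vector_derivative - (cscale e (S ** S) ** X y t)) (at t)"
    and tXb: "\<And>y t. ((\<lambda>t. Xb y t) has_vector_derivative (cscale e (Sb ** Sb) ** Xb y t)) (at t)"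
    and cX: "\<And>y t. S ** X y t = X y t ** S" and cXb: "\<And>y t. Sb ** Xb y t = Xb y t ** Sb"
    and iX: "\<And>y t. invertible (X y t)" and iXb: "\<And>y t. invertible (Xb y t)"
begin

definition "Mf y t = matrix_inv (Xb y t) - Kb ** X y t ** K"
definition "Nf y t = matrix_inv (X y t) - K ** Xb y t ** Kb"

abbreviation "fq y t \<equiv> qsol U Vb K Kb (X y t) (Xb y t)"
abbreviation "fqb y t \<equiv> qbsol Ub V K Kb (X y t) (Xb y t)"
abbreviation "fp y t \<equiv> psol U V K Kb (X y t) (Xb y t)"
abbreviation "fpb y t \<equiv> pbsol Ub Vb K Kb (X y t) (Xb y t)"

lemma fq_eq: "fq y t = U ** matrix_inv (Mf y t) ** Vb" by (simp add: qsol_def Mf_def)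
lemma fqb_eq: "fqb y t = Ub ** matrix_inv (Nf y t) ** V" by (simp add: qbsol_def Nf_def)
lemma fp_eq: "fp y t = U ** Xb y t ** Kb ** matrix_inv (Nf y t) ** V" by (simp add: psol_def Nf_def)

lemma reg_iff: "regular K Kb (X y t) (Xb y t) \<longleftrightarrow> invertible (Mf y t) \<and> invertible (Nf y t)"
  by (simp add: regular_def Mf_def Nf_def iX iXb)

lemma cpt_at:
  assumes "invertible (Mf y t)" "invertible (Nf y t)"
  shows "cpt U Ub V Vb S Sb K Kb (X y t) (Xb y t) (Mf y t) (matrix_inv (Mf y t)) (Nf y t) (matrix_inv (Nf y t))"
  using assms by unfold_locales (simp_all add: syl1 syl2 iX iXb cX cXb Mf_def Nf_def inv_r inv_l)

lemma dM: "((\<lambda>y. Mf y t) has_vector_derivative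
    (- (matrix_inv (Xb y t) ** (- (Sb ** Xb y t)) ** matrix_inv (Xb y t)) - Kb ** (- (S ** X y t)) ** K)) (at y)"
  unfolding Mf_def
  by (intro has_vector_derivative_diff inv_hvd(1)[OF dXb iXb] hvd_rmul hvd_lmul dX)

lemma dN: "((\<lambda>y. Nf y t) has_vector_derivative
    (- (matrix_inv (X y t) ** (- (S ** X y t)) ** matrix_inv (X y t)) - K ** (- (Sb ** Xb y t)) ** Kb)) (at y)"
  unfolding Nf_def
  by (intro has_vector_derivative_diff inv_hvd(1)[OF dX iX] hvd_rmul hvd_lmul dXb)

lemma tM: "((\<lambda>t. Mf y t) has_vector_derivative
    (- (matrix_inv (Xb y t) ** (cscale e (Sb ** Sb) ** Xb y t) ** matrix_inv (Xb y t)) - Kb ** (- (cscale e (S ** S) ** X y t)) ** K)) (at t)"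
  unfolding Mf_def
  by (intro has_vector_derivative_diff inv_hvd(1)[OF tXb iXb] hvd_rmul hvd_lmul tX)

lemma evreg: "invertible (Mf x t) \<Longrightarrow> invertible (Nf x t) \<Longrightarrow>
   eventually (\<lambda>y. invertible (Mf y t) \<and> invertible (Nf y t)) (nhds x)"
  using inv_hvd(2)[OF dM] inv_hvd(2)[OF dN] by (simp add: eventually_conj)

lemma dMi: "invertible (Mf y t) \<Longrightarrow> ((\<lambda>y. matrix_inv (Mf y t)) has_vector_derivative
   - (matrix_inv (Mf y t) ** (- (matrix_inv (Xb y t) ** (- (Sb ** Xb y t)) ** matrix_inv (Xb y t)) - Kb ** (- (S ** X y t)) ** K) ** matrix_inv (Mf y t))) (at y)"
  by (rule inv_hvd(1)[OF dM])

lemma tMi: "invertible (Mf y t) \<Longrightarrow> ((\<lambda>t. matrix_inv (Mf y t)) has_vector_derivative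
   - (matrix_inv (Mf y t) ** (- (matrix_inv (Xb y t) ** (cscale e (Sb ** Sb) ** Xb y t) ** matrix_inv (Xb y t)) - Kb ** (- (cscale e (S ** S) ** X y t)) ** K) ** matrix_inv (Mf y t))) (at t)"
  by (rule inv_hvd(1)[OF tM])

abbreviation "Mi y t \<equiv> matrix_inv (Mf y t)"
abbreviation "Ni y t \<equiv> matrix_inv (Nf y t)"
abbreviation "Mxf y t \<equiv> - (matrix_inv (Xb y t) ** (- (Sb ** Xb y t)) ** matrix_inv (Xb y t)) - Kb ** (- (S ** X y t)) ** K"
abbreviation "Mtf y t \<equiv> - (matrix_inv (Xb y t) ** (cscale e (Sb ** Sb) ** Xb y t) ** matrix_inv (Xb y t)) - Kb ** (- (cscale e (S ** S) ** X y t)) ** K"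
abbreviation "Fq y t \<equiv> - (U ** Mi y t ** Sb ** Vb + U ** Mi y t ** Vb ** (Ub ** X y t ** K ** Mi y t ** Vb))"

lemma dq_at: "invertible (Mf y t) \<Longrightarrow> ((\<lambda>y. fq y t) has_vector_derivative - (U ** Mi y t ** Mxf y t ** Mi y t ** Vb)) (at y)"
  unfolding fq_eq by (rule has_vector_derivative_eq_rhs[OF hvd_rmul[OF hvd_lmul[OF dMi]]]) (simp_all add: msimps)

lemma tq_at: "invertible (Mf y t) \<Longrightarrow> ((\<lambda>t. fq y t) has_vector_derivative - (U ** Mi y t ** Mtf y t ** Mi y t ** Vb)) (at t)"
  unfolding fq_eq by (rule has_vector_derivative_eq_rhs[OF hvd_rmul[OF hvd_lmul[OF tMi]]]) (simp_all add: msimps)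

lemma dxq: assumes "invertible (Mf y t)" "invertible (Nf y t)" shows "dx fq y t = Fq y t"
proof -
  interpret c: cpt U Ub V Vb S Sb K Kb "X y t" "Xb y t" "Mf y t" "Mi y t" "Nf y t" "Ni y t"
    by (rule cpt_at[OF assms])
  show ?thesis unfolding dx_def using vector_derivative_at[OF dq_at[OF assms(1)]] c.dq_eq by simp
qed

lemma dFq: assumes "invertible (Mf x t)"
  shows "((\<lambda>y. Fq y t) has_vector_derivative
    - (U ** (- (Mi x t ** Mxf x t ** Mi x t)) ** Sb ** Vb + U ** (- (Mi x t ** Mxf x t ** Mi x t)) ** Vb ** (Ub ** X x t ** K ** Mi x t ** Vb)
          + U ** Mi x t ** Vb ** (Ub ** (- (S ** X x t)) ** K ** Mi x t ** Vb + Ub ** X x t ** K ** (- (Mi x t ** Mxf x t ** Mi x t)) ** Vb))) (at x)"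
proof -
  note dmi = dMi[OF assms]
  have a: "((\<lambda>y. U ** Mi y t ** Sb ** Vb) has_vector_derivative U ** (- (Mi x t ** Mxf x t ** Mi x t)) ** Sb ** Vb) (at x)"
    by (intro hvd_rmul hvd_lmul dmi)
  have b1: "((\<lambda>y. U ** Mi y t ** Vb) has_vector_derivative U ** (- (Mi x t ** Mxf x t ** Mi x t)) ** Vb) (at x)"
    by (intro hvd_rmul hvd_lmul dmi)
  have b2: "((\<lambda>y. Ub ** X y t ** K ** Mi y t ** Vb) has_vector_derivative
       Ub ** (- (S ** X x t)) ** K ** Mi x t ** Vb + Ub ** X x t ** K ** (- (Mi x t ** Mxf x t ** Mi x t)) ** Vb) (at x)"
    by (rule has_vector_derivative_eq_rhs[OF hvd_rmul[OF hvd_mm[OF hvd_rmul[OF hvd_lmul[OF dX]] dmi]]])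
      (simp add: msimps algebra_simps)
  have b: "((\<lambda>y. U ** Mi y t ** Vb ** (Ub ** X y t ** K ** Mi y t ** Vb)) has_vector_derivative
      U ** (- (Mi x t ** Mxf x t ** Mi x t)) ** Vb ** (Ub ** X x t ** K ** Mi x t ** Vb)
      + U ** Mi x t ** Vb ** (Ub ** (- (S ** X x t)) ** K ** Mi x t ** Vb + Ub ** X x t ** K ** (- (Mi x t ** Mxf x t ** Mi x t)) ** Vb)) (at x)"
    by (rule has_vector_derivative_eq_rhs[OF hvd_mm[OF b1 b2]]) (simp add: algebra_simps)
  show ?thesis by (rule has_vector_derivative_eq_rhs[OF has_vector_derivative_minus[OF has_vector_derivative_add[OF a b]]])
    (simp add: algebra_simps)
qed

lemma dxxq: assumes "invertible (Mf x t)" "invertible (Nf x t)"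
  shows "dx (dx fq) x t = - (U ** (- (Mi x t ** Mxf x t ** Mi x t)) ** Sb ** Vb + U ** (- (Mi x t ** Mxf x t ** Mi x t)) ** Vb ** (Ub ** X x t ** K ** Mi x t ** Vb)
          + U ** Mi x t ** Vb ** (Ub ** (- (S ** X x t)) ** K ** Mi x t ** Vb + Ub ** X x t ** K ** (- (Mi x t ** Mxf x t ** Mi x t)) ** Vb))"
    and "(\<lambda>y. dx fq y t) differentiable (at x)"
proof -
  have ev: "eventually (\<lambda>y. dx fq y t = Fq y t) (nhds x)"
    using evreg[OF assms] by (rule eventually_mono) (simp add: dxq)
  have h: "((\<lambda>y. dx fq y t) has_vector_derivative
    - (U ** (- (Mi x t ** Mxf x t ** Mi x t)) ** Sb ** Vb + U ** (- (Mi x t ** Mxf x t ** Mi x t)) ** Vb ** (Ub ** X x t ** K ** Mi x t ** Vb)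
          + U ** Mi x t ** Vb ** (Ub ** (- (S ** X x t)) ** K ** Mi x t ** Vb + Ub ** X x t ** K ** (- (Mi x t ** Mxf x t ** Mi x t)) ** Vb))) (at x)"
    using has_vector_derivative_cong_ev[where f="\<lambda>y. dx fq y t" and g="\<lambda>y. Fq y t" and x=x and S=UNIV] dFq[OF assms(1)] ev
      eventually_nhds_x_imp_x[OF ev]
    by (simp add: eventually_mono)
  show "dx (dx fq) x t = - (U ** (- (Mi x t ** Mxf x t ** Mi x t)) ** Sb ** Vb + U ** (- (Mi x t ** Mxf x t ** Mi x t)) ** Vb ** (Ub ** X x t ** K ** Mi x t ** Vb)
          + U ** Mi x t ** Vb ** (Ub ** (- (S ** X x t)) ** K ** Mi x t ** Vb + Ub ** X x t ** K ** (- (Mi x t ** Mxf x t ** Mi x t)) ** Vb))"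
    unfolding dx_def[of "dx fq"] using vector_derivative_at[OF h] by simp
  show "(\<lambda>y. dx fq y t) differentiable (at x)" using h by (rule differentiableI_vector)
qed

lemma dp_at: assumes "invertible (Mf x t)" "invertible (Nf x t)"
  shows "((\<lambda>y. fp y t) has_vector_derivative - (fq x t ** fqb x t)) (at x)"
proof -
  interpret c: cpt U Ub V Vb S Sb K Kb "X x t" "Xb x t" "Mf x t" "Mi x t" "Nf x t" "Ni x t"
    by (rule cpt_at[OF assms])
  have ev: "eventually (\<lambda>y. fp y t = U ** Mi y t ** Kb ** X y t ** V) (nhds x)"
    using evreg[OF assms]
  proof (rule eventually_mono)
    fix y assume "invertible (Mf y t) \<and> invertible (Nf y t)"
    then interpret c': cpt U Ub V Vb S Sb K Kb "X y t" "Xb y t" "Mf y t" "Mi y t" "Nf y t" "Ni y t"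
      using cpt_at by blast
    show "fp y t = U ** Mi y t ** Kb ** X y t ** V" unfolding fp_eq by (rule c'.p_form)
  qed
  have h: "((\<lambda>y. U ** Mi y t ** Kb ** X y t ** V) has_vector_derivative
      U ** (- (Mi x t ** Mxf x t ** Mi x t)) ** Kb ** X x t ** V + U ** Mi x t ** Kb ** (- (S ** X x t)) ** V) (at x)"
    by (rule has_vector_derivative_eq_rhs[OF hvd_rmul[OF hvd_mm[OF hvd_rmul[OF hvd_lmul[OF dMi[OF assms(1)]]] dX]]])
      (simp add: msimps algebra_simps)
  have "((\<lambda>y. fp y t) has_vector_derivative
      U ** (- (Mi x t ** Mxf x t ** Mi x t)) ** Kb ** X x t ** V + U ** Mi x t ** Kb ** (- (S ** X x t)) ** V) (at x)"
    using has_vector_derivative_cong_ev[where f="\<lambda>y. fp y t" and g="\<lambda>y. U ** Mi y t ** Kb ** X y t ** V" and x=x and S=UNIV] h ev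
      eventually_nhds_x_imp_x[OF ev]
    by (simp add: eventually_mono)
  thus ?thesis unfolding c.dp_eq fq_eq fqb_eq .
qed

lemma qhalf: assumes "invertible (Mf x t)" "invertible (Nf x t)"
  shows "(\<lambda>y. fq y t) differentiable (at x)" "(\<lambda>y. dx fq y t) differentiable (at x)"
    "(\<lambda>s. fq x s) differentiable (at t)" "(\<lambda>y. fp y t) differentiable (at x)"
    "cscale e (dt fq x t) + dx (dx fq) x t - cscale 2 (fq x t ** fqb x t ** fq x t) = 0"
    "dx fp x t = - (fq x t ** fqb x t)"
proof -
  interpret c: cpt U Ub V Vb S Sb K Kb "X x t" "Xb x t" "Mf x t" "Mi x t" "Nf x t" "Ni x t"
    by (rule cpt_at[OF assms])
  show "(\<lambda>y. fq y t) differentiable (at x)" using dq_at[OF assms(1)] by (rule differentiableI_vector)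
  show "(\<lambda>y. dx fq y t) differentiable (at x)" by (rule dxxq(2)[OF assms])
  show "(\<lambda>s. fq x s) differentiable (at t)" using tq_at[OF assms(1)] by (rule differentiableI_vector)
  show "(\<lambda>y. fp y t) differentiable (at x)" using dp_at[OF assms] by (rule differentiableI_vector)
  show "dx fp x t = - (fq x t ** fqb x t)" unfolding dx_def using vector_derivative_at[OF dp_at[OF assms]] .
  have dtq: "dt fq x t = - (U ** Mi x t ** Mtf x t ** Mi x t ** Vb)"
    unfolding dt_def using vector_derivative_at[OF tq_at[OF assms(1)]] .
  show "cscale e (dt fq x t) + dx (dx fq) x t - cscale 2 (fq x t ** fqb x t ** fq x t) = 0"
    unfolding dtq dxxq(1)[OF assms] unfolding fq_eq fqb_eq using c.cont_eq[OF ee] by (simp add: matrix_mul_assoc)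
qed

end



lemma dpt_at:
  fixes U :: "complex^'n2::finite^'m1::finite" and Ub :: "complex^'n1::finite^'m2::finite"
    and V :: "complex^'m1^'n1" and Vb :: "complex^'m2^'n2"
    and S :: "complex^'n1^'n1" and Sb :: "complex^'n2^'n2"
    and K :: "complex^'n2^'n1" and Kb :: "complex^'n1^'n2"
  assumes "invertible S" "invertible Sb" "matrix_inv S ** K - K ** Sb = V ** U"
    "matrix_inv Sb ** Kb - Kb ** S = Vb ** Ub" "invertible X" "invertible Xb"
    "S ** X = X ** S" "Sb ** Xb = Xb ** Sb"
    "regular K Kb X Xb"
  shows "dpt U Ub V Vb S Sb K Kb X Xb (matrix_inv Xb - Kb ** X ** K) (matrix_inv (matrix_inv Xb - Kb ** X ** K))
    (matrix_inv X - K ** Xb ** Kb) (matrix_inv (matrix_inv X - K ** Xb ** Kb))"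
  using assms by unfold_locales (simp_all add: regular_def inv_r inv_l)

locale scase =
  fixes U :: "complex^'n2::finite^'m1::finite" and Ub :: "complex^'n1::finite^'m2::finite"
    and V :: "complex^'m1^'n1" and Vb :: "complex^'m2^'n2"
    and S :: "complex^'n1^'n1" and Sb :: "complex^'n2^'n2"
    and K :: "complex^'n2^'n1" and Kb :: "complex^'n1^'n2"
    and X :: "int \<Rightarrow> real \<Rightarrow> complex^'n1^'n1" and Xb :: "int \<Rightarrow> real \<Rightarrow> complex^'n2^'n2"
    and e :: complex
  assumes iS: "invertible S" and iSb: "invertible Sb"
    and syl1: "matrix_inv S ** K - K ** Sb = V ** U"
    and syl2: "matrix_inv Sb ** Kb - Kb ** S = Vb ** Ub"
    and ee: "e * e = -1"
    and sX: "\<And>x t. X (x + 1) t = S ** X x t" and sXb: "\<And>x t. Xb (x + 1) t = Sb ** Xb x t"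
    and tX: "\<And>x t. ((\<lambda>t. X x t) has_vector_derivative - (cscale e (omega S) ** X x t)) (at t)"
    and tXb: "\<And>x t. ((\<lambda>t. Xb x t) has_vector_derivative (cscale e (omega Sb) ** Xb x t)) (at t)"
    and cX: "\<And>x t. S ** X x t = X x t ** S" and cXb: "\<And>x t. Sb ** Xb x t = Xb x t ** Sb"
    and iX: "\<And>x t. invertible (X x t)" and iXb: "\<And>x t. invertible (Xb x t)"
begin

abbreviation "fq y t \<equiv> qsol U Vb K Kb (X y t) (Xb y t)"
abbreviation "fqb y t \<equiv> qbsol Ub V K Kb (X y t) (Xb y t)"
abbreviation "fp y t \<equiv> psol U V K Kb (X y t) (Xb y t)"
abbreviation "Mf y t \<equiv> matrix_inv (Xb y t) - Kb ** X y t ** K"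
abbreviation "Nf y t \<equiv> matrix_inv (X y t) - K ** Xb y t ** Kb"

lemma pt: "regular K Kb (X x t) (Xb x t) \<Longrightarrow>
  dpt U Ub V Vb S Sb K Kb (X x t) (Xb x t) (Mf x t) (matrix_inv (Mf x t)) (Nf x t) (matrix_inv (Nf x t))"
  by (rule dpt_at[OF iS iSb syl1 syl2 iX iXb cX cXb])

lemma pr: "regular K Kb (X x t) (Xb x t) \<Longrightarrow> regular K Kb (X (x+1) t) (Xb (x+1) t) \<Longrightarrow>
  dpair U Ub V Vb S Sb K Kb (X x t) (Xb x t) (Mf x t) (matrix_inv (Mf x t)) (Nf x t) (matrix_inv (Nf x t))
    (X (x+1) t) (Xb (x+1) t) (Mf (x+1) t) (matrix_inv (Mf (x+1) t)) (Nf (x+1) t) (matrix_inv (Nf (x+1) t))"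
  unfolding dpair_def dpair_axioms_def using pt sX sXb by blast

lemma tM: "((\<lambda>t. Mf y t) has_vector_derivative
    (- (matrix_inv (Xb y t) ** (cscale e (omega Sb) ** Xb y t) ** matrix_inv (Xb y t)) - Kb ** (- (cscale e (omega S) ** X y t)) ** K)) (at t)"
  by (intro has_vector_derivative_diff inv_hvd(1)[OF tXb iXb] hvd_rmul hvd_lmul tX)

lemma tq_at: "invertible (Mf y t) \<Longrightarrow> ((\<lambda>t. fq y t) has_vector_derivative
   - (U ** matrix_inv (Mf y t) ** (- (matrix_inv (Xb y t) ** (cscale e (omega Sb) ** Xb y t) ** matrix_inv (Xb y t)) - Kb ** (- (cscale e (omega S) ** X y t)) ** K) ** matrix_inv (Mf y t) ** Vb)) (at t)"
  unfolding qsol_def by (rule has_vector_derivative_eq_rhs[OF hvd_rmul[OF hvd_lmul[OF inv_hvd(1)[OF tM]]]]) (simp_all add: msimps)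

lemma qhalf:
  assumes r0: "regular K Kb (X (x - 1) t) (Xb (x - 1) t)" and r1: "regular K Kb (X x t) (Xb x t)"
    and r2: "regular K Kb (X (x + 1) t) (Xb (x + 1) t)"
  shows "(\<lambda>s. fq x s) differentiable (at t)"
    "cscale e (dt fq x t) + fq (x+1) t - cscale 2 (fq x t) + fq (x-1) t
       - fq (x+1) t ** fqb x t ** fq x t - fq x t ** fqb x t ** fq (x-1) t = 0"
    "fp (x+1) t - fp x t = - (fq (x+1) t ** fqb x t)"
proof -
  have iM: "invertible (Mf x t)" using r1 by (simp add: regular_def)
  have xx: "x - 1 + 1 = x" by simp
  interpret A: dpair U Ub V Vb S Sb K Kb "X (x - 1) t" "Xb (x - 1) t" "Mf (x - 1) t" "matrix_inv (Mf (x - 1) t)" "Nf (x - 1) t" "matrix_inv (Nf (x - 1) t)"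
    "X x t" "Xb x t" "Mf x t" "matrix_inv (Mf x t)" "Nf x t" "matrix_inv (Nf x t)"
    using pr[OF r0] r1 by (simp add: xx)
  interpret B: dpair U Ub V Vb S Sb K Kb "X x t" "Xb x t" "Mf x t" "matrix_inv (Mf x t)" "Nf x t" "matrix_inv (Nf x t)"
    "X (x+1) t" "Xb (x+1) t" "Mf (x+1) t" "matrix_inv (Mf (x+1) t)" "Nf (x+1) t" "matrix_inv (Nf (x+1) t)"
    by (rule pr[OF r1 r2])
  show "(\<lambda>s. fq x s) differentiable (at t)" using tq_at[OF iM] by (rule differentiableI_vector)
  have dtq: "dt fq x t = - (U ** matrix_inv (Mf x t) ** (- (matrix_inv (Xb x t) ** (cscale e (omega Sb) ** Xb x t) ** matrix_inv (Xb x t)) - Kb ** (- (cscale e (omega S) ** X x t)) ** K) ** matrix_inv (Mf x t) ** Vb)"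
    unfolding dt_def using vector_derivative_at[OF tq_at[OF iM]] .
  show "cscale e (dt fq x t) + fq (x+1) t - cscale 2 (fq x t) + fq (x-1) t
       - fq (x+1) t ** fqb x t ** fq x t - fq x t ** fqb x t ** fq (x-1) t = 0"
    using A.p1.semi_eq[OF ee B.G1 A.G2 dtq] by (simp add: qsol_def qbsol_def)
  show "fp (x+1) t - fp x t = - (fq (x+1) t ** fqb x t)"
    using B.Pshift by (simp add: qsol_def qbsol_def psol_def matrix_mul_assoc)
qed

end

locale fcase =
  fixes U :: "complex^'n2::finite^'m1::finite" and Ub :: "complex^'n1::finite^'m2::finite"
    and V :: "complex^'m1^'n1" and Vb :: "complex^'m2^'n2"
    and S :: "complex^'n1^'n1" and Sb :: "complex^'n2^'n2"
    and K :: "complex^'n2^'n1" and Kb :: "complex^'n1^'n2"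
    and X :: "int \<Rightarrow> int \<Rightarrow> complex^'n1^'n1" and Xb :: "int \<Rightarrow> int \<Rightarrow> complex^'n2^'n2"
    and e :: complex
  assumes iS: "invertible S" and iSb: "invertible Sb"
    and syl1: "matrix_inv S ** K - K ** Sb = V ** U"
    and syl2: "matrix_inv Sb ** Kb - Kb ** S = Vb ** Ub"
    and sX: "\<And>x t. X (x + 1) t = S ** X x t" and sXb: "\<And>x t. Xb (x + 1) t = Sb ** Xb x t"
    and tX: "\<And>x t. S ** X x (t + 1) = cscale (1 + e) (X x (t + 1)) + cscale (1 - e) (X x t) - X x t ** matrix_inv S"
    and tXb: "\<And>x t. matrix_inv Sb ** matrix_inv (Xb x (t + 1)) = cscale (1 + e) (matrix_inv (Xb x (t + 1)))
       - matrix_inv (Xb x t) ** Sb - cscale (e - 1) (matrix_inv (Xb x t))"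
    and cX: "\<And>x t. S ** X x t = X x t ** S" and cXb: "\<And>x t. Sb ** Xb x t = Xb x t ** Sb"
    and iX: "\<And>x t. invertible (X x t)" and iXb: "\<And>x t. invertible (Xb x t)"
begin

abbreviation "fq y t \<equiv> qsol U Vb K Kb (X y t) (Xb y t)"
abbreviation "fqb y t \<equiv> qbsol Ub V K Kb (X y t) (Xb y t)"
abbreviation "fp y t \<equiv> psol U V K Kb (X y t) (Xb y t)"
abbreviation "fpb y t \<equiv> pbsol Ub Vb K Kb (X y t) (Xb y t)"
abbreviation "Mf y t \<equiv> matrix_inv (Xb y t) - Kb ** X y t ** K"
abbreviation "Nf y t \<equiv> matrix_inv (X y t) - K ** Xb y t ** Kb"

lemma pt: "regular K Kb (X x t) (Xb x t) \<Longrightarrow>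
  dpt U Ub V Vb S Sb K Kb (X x t) (Xb x t) (Mf x t) (matrix_inv (Mf x t)) (Nf x t) (matrix_inv (Nf x t))"
  by (rule dpt_at[OF iS iSb syl1 syl2 iX iXb cX cXb])

lemma pr: "regular K Kb (X x t) (Xb x t) \<Longrightarrow> regular K Kb (X (x+1) t) (Xb (x+1) t) \<Longrightarrow>
  dpair U Ub V Vb S Sb K Kb (X x t) (Xb x t) (Mf x t) (matrix_inv (Mf x t)) (Nf x t) (matrix_inv (Nf x t))
    (X (x+1) t) (Xb (x+1) t) (Mf (x+1) t) (matrix_inv (Mf (x+1) t)) (Nf (x+1) t) (matrix_inv (Nf (x+1) t))"
  unfolding dpair_def dpair_axioms_def using pt sX sXb by blast

lemma tp: "regular K Kb (X x t) (Xb x t) \<Longrightarrow> regular K Kb (X x (t+1)) (Xb x (t+1)) \<Longrightarrow>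
  tpair U Ub V Vb S Sb K Kb (X x t) (Xb x t) (Mf x t) (matrix_inv (Mf x t)) (Nf x t) (matrix_inv (Nf x t))
    (X x (t+1)) (Xb x (t+1)) (Mf x (t+1)) (matrix_inv (Mf x (t+1))) (Nf x (t+1)) (matrix_inv (Nf x (t+1))) e"
  unfolding tpair_def tpair_axioms_def using pt tX tXb by blast

lemma qhalf:
  assumes r0: "regular K Kb (X (x - 1) t) (Xb (x - 1) t)" and r1: "regular K Kb (X x t) (Xb x t)"
    and r2: "regular K Kb (X (x + 1) t) (Xb (x + 1) t)"
    and r3: "regular K Kb (X x (t + 1)) (Xb x (t + 1))"
    and r4: "regular K Kb (X (x + 1) (t + 1)) (Xb (x + 1) (t + 1))"
  shows "cscale e (fq x (t+1) - fq x t) + (fq (x+1) (t+1) - fq x (t+1)) - (fq x t - fq (x-1) t)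
       - fq (x+1) (t+1) ** fqb x (t+1) ** fq x (t+1) - fq x t ** fqb x t ** fq (x-1) t
       + (fp x (t+1) - fp x t) ** fq x (t+1) + fq x t ** (fpb x (t+1) - fpb x t) = 0"
    "fp (x+1) t - fp x t = - (fq (x+1) t ** fqb x t)"
proof -
  have xx: "x - 1 + 1 = x" by simp
  interpret A: dpair U Ub V Vb S Sb K Kb "X (x - 1) t" "Xb (x - 1) t" "Mf (x - 1) t" "matrix_inv (Mf (x - 1) t)" "Nf (x - 1) t" "matrix_inv (Nf (x - 1) t)"
    "X x t" "Xb x t" "Mf x t" "matrix_inv (Mf x t)" "Nf x t" "matrix_inv (Nf x t)"
    using pr[OF r0] r1 by (simp add: xx)
  interpret B: dpair U Ub V Vb S Sb K Kb "X x t" "Xb x t" "Mf x t" "matrix_inv (Mf x t)" "Nf x t" "matrix_inv (Nf x t)"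
    "X (x+1) t" "Xb (x+1) t" "Mf (x+1) t" "matrix_inv (Mf (x+1) t)" "Nf (x+1) t" "matrix_inv (Nf (x+1) t)"
    by (rule pr[OF r1 r2])
  interpret C: dpair U Ub V Vb S Sb K Kb "X x (t+1)" "Xb x (t+1)" "Mf x (t+1)" "matrix_inv (Mf x (t+1))" "Nf x (t+1)" "matrix_inv (Nf x (t+1))"
    "X (x+1) (t+1)" "Xb (x+1) (t+1)" "Mf (x+1) (t+1)" "matrix_inv (Mf (x+1) (t+1))" "Nf (x+1) (t+1)" "matrix_inv (Nf (x+1) (t+1))"
    by (rule pr[OF r3 r4])
  interpret T: tpair U Ub V Vb S Sb K Kb "X x t" "Xb x t" "Mf x t" "matrix_inv (Mf x t)" "Nf x t" "matrix_inv (Nf x t)"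
    "X x (t+1)" "Xb x (t+1)" "Mf x (t+1)" "matrix_inv (Mf x (t+1))" "Nf x (t+1)" "matrix_inv (Nf x (t+1))" e
    by (rule tp[OF r1 r3])
  show "cscale e (fq x (t+1) - fq x t) + (fq (x+1) (t+1) - fq x (t+1)) - (fq x t - fq (x-1) t)
       - fq (x+1) (t+1) ** fqb x (t+1) ** fq x (t+1) - fq x t ** fqb x t ** fq (x-1) t
       + (fp x (t+1) - fp x t) ** fq x (t+1) + fq x t ** (fpb x (t+1) - fpb x t) = 0"
    using T.full_eq[OF C.G1 A.G2] by (simp add: qsol_def qbsol_def psol_def pbsol_def matrix_mul_assoc)
  show "fp (x+1) t - fp x t = - (fq (x+1) t ** fqb x t)"
    using B.Pshift by (simp add: qsol_def qbsol_def psol_def matrix_mul_assoc)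
qed

end



lemma cs_ofreal_mult: "cscale (c * complex_of_real t) A = t *\<^sub>R cscale c A"
  apply (simp add: cscale_def vec_eq_iff) apply (simp add: scaleR_conv_of_real) done

lemma cs_scaleR: "cscale c (r *\<^sub>R A) = r *\<^sub>R cscale c A"
  by (simp add: cscale_def vec_eq_iff)

lemma mexp_hvd_gen:
  assumes "A ** B = B ** A" "\<And>y. F y = mexp (y *\<^sub>R A + B)" "D = A ** F y"
  shows "(F has_vector_derivative D) (at y)"
proof -
  have "F = (\<lambda>y. mexp (y *\<^sub>R A + B))" using assms(2) by auto
  thus ?thesis using mexp_deriv[OF assms(1), of y] assms(3) assms(2) by simp
qed

lemma mexp_comm': "C ** D = D ** C \<Longrightarrow> D ** mexp C = mexp C ** D"
  using mexp_comm by metis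

lemma sq_comm: "S ** (S ** S) = (S ** S) ** S" by (simp add: matrix_mul_assoc)

lemma XiC_dx: "((\<lambda>y. XiC S y t) has_vector_derivative - (S ** XiC S y t)) (at y)"
  by (rule mexp_hvd_gen[where A="- S" and B="- cscale (\<i> * complex_of_real t) (S ** S)"])
    (simp_all add: XiC_def cs_of_real msimps algebra_simps)
lemma XiC_dt: "((\<lambda>t. XiC S y t) has_vector_derivative - (cscale \<i> (S ** S) ** XiC S y t)) (at t)"
  by (rule mexp_hvd_gen[where A="- cscale \<i> (S ** S)" and B="- (y *\<^sub>R S)"])
    (simp_all add: XiC_def cs_of_real cs_ofreal_mult msimps algebra_simps scalar_matrix_assoc[symmetric] matrix_scalar_ac cs_scaleR)
lemma XibC_dx: "((\<lambda>y. XibC Sb y t) has_vector_derivative - (Sb ** XibC Sb y t)) (at y)"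
  by (rule mexp_hvd_gen[where A="- Sb" and B="cscale (\<i> * complex_of_real t) (Sb ** Sb)"])
    (simp_all add: XibC_def cs_of_real msimps algebra_simps)
lemma XibC_dt: "((\<lambda>t. XibC Sb y t) has_vector_derivative (cscale \<i> (Sb ** Sb) ** XibC Sb y t)) (at t)"
  by (rule mexp_hvd_gen[where A="cscale \<i> (Sb ** Sb)" and B="- (y *\<^sub>R Sb)"])
    (simp_all add: XibC_def cs_of_real cs_ofreal_mult msimps algebra_simps scalar_matrix_assoc[symmetric] matrix_scalar_ac cs_scaleR)

lemma XiC_comm: "S ** XiC S y t = XiC S y t ** S"
  unfolding XiC_def by (rule mexp_comm') (simp add: msimps cs_of_real scalar_matrix_assoc[symmetric] matrix_scalar_ac cs_scaleR)
lemma XibC_comm: "Sb ** XibC Sb y t = XibC Sb y t ** Sb"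
  unfolding XibC_def by (rule mexp_comm') (simp add: msimps cs_of_real scalar_matrix_assoc[symmetric] matrix_scalar_ac cs_scaleR)

lemma mpow_comm: "A ** B = B ** A \<Longrightarrow> mpow A k ** B = B ** mpow A k"
  by (induct k) (simp_all add: matrix_mul_assoc, metis matrix_mul_assoc)

lemma invertible_mpow: "invertible (A::complex^'n::finite^'n) \<Longrightarrow> invertible (mpow A k)"
  by (induct k) (simp_all add: invertible_mult', simp add: invertible_def)

lemma mpowi_comm:
  fixes A B :: "complex^'n::finite^'n"
  assumes "invertible A" "A ** B = B ** A" shows "mpowi A x ** B = B ** mpowi A x"
  using mpow_comm[OF assms(2)] mpow_comm[OF comm_inv[OF assms]] by (simp add: mpowi_def)

lemma invertible_mpowi: "invertible (A::complex^'n::finite^'n) \<Longrightarrow> invertible (mpowi A x)"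
  by (simp add: mpowi_def invertible_mpow invertible_inv)

lemma mpowi_succ:
  fixes A :: "complex^'n::finite^'n"
  assumes "invertible A" shows "mpowi A (x + 1) = A ** mpowi A x"
proof (cases "0 \<le> x")
  case True
  hence "nat (x + 1) = Suc (nat x)" by simp
  thus ?thesis using True by (simp add: mpowi_def)
next
  case False
  show ?thesis
  proof (cases "x = -1")
    case True
    thus ?thesis by (simp add: mpowi_def inv_r[OF assms])
  next
    case False2: False
    hence "nat (- x) = Suc (nat (- (x + 1)))" "\<not> 0 \<le> x + 1" using False by auto
    thus ?thesis using False by (simp add: mpowi_def matrix_mul_assoc inv_r[OF assms])
  qed
qed

lemma omega_comm: "invertible S \<Longrightarrow> S ** omega S = omega S ** S"
  by (simp add: omega_def msimps inv_r inv_l)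

lemma XiS_shift: "invertible S \<Longrightarrow> XiS S (x + 1) t = S ** XiS S x t"
  by (simp add: XiS_def mpowi_succ matrix_mul_assoc)
lemma XibS_shift: "invertible Sb \<Longrightarrow> XibS Sb (x + 1) t = Sb ** XibS Sb x t"
  by (simp add: XibS_def mpowi_succ matrix_mul_assoc)

lemma XiS_dt: assumes "invertible S"
  shows "((\<lambda>t. XiS S x t) has_vector_derivative - (cscale \<i> (omega S) ** XiS S x t)) (at t)"
proof -
  have "((\<lambda>t. mexp (- cscale (\<i> * complex_of_real t) (omega S))) has_vector_derivative
      - cscale \<i> (omega S) ** mexp (- cscale (\<i> * complex_of_real t) (omega S))) (at t)"
    by (rule mexp_hvd_gen[where A="- cscale \<i> (omega S)" and B=0]) (simp_all add: cs_ofreal_mult)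
  hence "((\<lambda>t. XiS S x t) has_vector_derivative mpowi S x ** (- cscale \<i> (omega S) ** mexp (- cscale (\<i> * complex_of_real t) (omega S)))) (at t)"
    unfolding XiS_def by (rule hvd_lmul)
  moreover have "mpowi S x ** (- cscale \<i> (omega S) ** mexp (- cscale (\<i> * complex_of_real t) (omega S)))
      = - (cscale \<i> (omega S) ** XiS S x t)"
    using mpowi_comm[OF assms omega_comm[OF assms]]
    by (simp add: XiS_def msimps flip: matrix_mul_assoc) (simp add: matrix_mul_assoc)
  ultimately show ?thesis by simp
qed

lemma XibS_dt: assumes "invertible Sb"
  shows "((\<lambda>t. XibS Sb x t) has_vector_derivative (cscale \<i> (omega Sb) ** XibS Sb x t)) (at t)"
proof -
  have "((\<lambda>t. mexp (cscale (\<i> * complex_of_real t) (omega Sb))) has_vector_derivative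
      cscale \<i> (omega Sb) ** mexp (cscale (\<i> * complex_of_real t) (omega Sb))) (at t)"
    by (rule mexp_hvd_gen[where A="cscale \<i> (omega Sb)" and B=0]) (simp_all add: cs_ofreal_mult)
  hence "((\<lambda>t. XibS Sb x t) has_vector_derivative mpowi Sb x ** (cscale \<i> (omega Sb) ** mexp (cscale (\<i> * complex_of_real t) (omega Sb)))) (at t)"
    unfolding XibS_def by (rule hvd_lmul)
  moreover have "mpowi Sb x ** (cscale \<i> (omega Sb) ** mexp (cscale (\<i> * complex_of_real t) (omega Sb)))
      = cscale \<i> (omega Sb) ** XibS Sb x t"
    using mpowi_comm[OF assms omega_comm[OF assms]]
    by (simp add: XibS_def msimps flip: matrix_mul_assoc) (simp add: matrix_mul_assoc)
  ultimately show ?thesis by simp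
qed

lemma XiS_comm: "invertible S \<Longrightarrow> S ** XiS S x t = XiS S x t ** S"
  unfolding XiS_def
  by (metis (no_types, lifting) matrix_mul_assoc mexp_comm' mpowi_comm cs_mm_l cs_mm_r mm_neg_l mm_neg_r omega_comm)
lemma XibS_comm: "invertible Sb \<Longrightarrow> Sb ** XibS Sb x t = XibS Sb x t ** Sb"
  unfolding XibS_def
  by (metis (no_types, lifting) matrix_mul_assoc mexp_comm' mpowi_comm cs_mm_l cs_mm_r omega_comm)
lemma XiS_inv: "invertible S \<Longrightarrow> invertible (XiS S x t)"
  by (simp add: XiS_def invertible_mult' invertible_mpowi invertible_mexp)
lemma XibS_inv: "invertible Sb \<Longrightarrow> invertible (XibS Sb x t)"
  by (simp add: XibS_def invertible_mult' invertible_mpowi invertible_mexp)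

definition Om :: "complex \<Rightarrow> complex^'n::finite^'n \<Rightarrow> complex^'n^'n" where
  "Om e S = (mat 1 + cscale e (mat 1 - matrix_inv S)) ** matrix_inv (mat 1 - cscale e (mat 1 - S))"

lemma Omega_Om: "Omega S = Om \<i> S" by (simp add: Omega_def Om_def)
lemma Omegabar_Om: "Omegabar S = Om (- \<i>) S"
  by (simp add: Omegabar_def Om_def cs_negc)

lemma ee2I: assumes "e * e = (-1::complex)" shows "e * (e * c) = - c"
proof -
  have "e * (e * c) = (e * e) * c" by (rule mult.assoc[symmetric])
  also have "\<dots> = - c" using assms by simp
  finally show ?thesis .
qed

lemma Om_poly1:
  fixes S :: "complex^'n::finite^'n"
  assumes ee: "e * e = -1" and iS: "invertible S"
  shows "(S - cscale (1 + e) (mat 1)) ** (mat 1 + cscale e (mat 1 - matrix_inv S))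
    = (cscale (1 - e) (mat 1) - matrix_inv S) ** (mat 1 - cscale e (mat 1 - S))"
  by (simp add: msimps csc inv_r[OF iS] inv_l[OF iS] ee ee2I[OF ee] algebra_simps)

lemma Om_poly2:
  fixes S :: "complex^'n::finite^'n"
  assumes ee: "e * e = -1" and iS: "invertible S"
  shows "(cscale (1 + e) (mat 1) - matrix_inv S) ** (mat 1 + cscale e (mat 1 - S))
    = (S + cscale (e - 1) (mat 1)) ** (mat 1 - cscale e (mat 1 - matrix_inv S))"
  by (simp add: msimps csc inv_r[OF iS] inv_l[OF iS] ee ee2I[OF ee] algebra_simps)

lemma W_comm: "S ** (mat 1 - cscale e (mat 1 - S)) = (mat 1 - cscale e (mat 1 - S)) ** S"
  by (simp add: msimps)
lemma P_comm: "invertible S \<Longrightarrow> S ** (mat 1 + cscale e (mat 1 - matrix_inv S)) = (mat 1 + cscale e (mat 1 - matrix_inv S)) ** S"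
  by (simp add: msimps inv_r inv_l)

lemma Om_comm:
  assumes iS: "invertible S" and iW: "invertible (mat 1 - cscale e (mat 1 - S))"
  shows "S ** Om e S = Om e S ** S"
proof -
  have c: "S ** matrix_inv (mat 1 - cscale e (mat 1 - S)) = matrix_inv (mat 1 - cscale e (mat 1 - S)) ** S"
    using comm_inv[OF iW W_comm[symmetric]] by simp
  let ?P = "mat 1 + cscale e (mat 1 - matrix_inv S)" and ?Wi = "matrix_inv (mat 1 - cscale e (mat 1 - S))"
  have "Om e S ** S = ?P ** (?Wi ** S)" by (simp add: Om_def matrix_mul_assoc)
  also have "\<dots> = (?P ** S) ** ?Wi" by (simp only: matrix_mul_assoc[symmetric] c[symmetric])
  also have "\<dots> = S ** Om e S" by (simp add: P_comm[OF iS] Om_def matrix_mul_assoc)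
  finally show ?thesis by simp
qed

lemma T1:
  fixes S X :: "complex^'n::finite^'n"
  assumes ee: "e * e = -1" and iS: "invertible S" and iW: "invertible (mat 1 - cscale e (mat 1 - S))"
    and cX: "S ** X = X ** S" and hXT: "XT = Om e S ** X"
  shows "S ** XT = cscale (1 + e) XT + cscale (1 - e) X - X ** matrix_inv S"
proof -
  have a: "(S - cscale (1 + e) (mat 1)) ** Om e S = cscale (1 - e) (mat 1) - matrix_inv S"
  proof -
    have "(S - cscale (1 + e) (mat 1)) ** Om e S = (S - cscale (1 + e) (mat 1)) ** (mat 1 + cscale e (mat 1 - matrix_inv S))
       ** matrix_inv (mat 1 - cscale e (mat 1 - S))" by (simp add: Om_def matrix_mul_assoc)
    also have "\<dots> = (cscale (1 - e) (mat 1) - matrix_inv S) ** (mat 1 - cscale e (mat 1 - S)) ** matrix_inv (mat 1 - cscale e (mat 1 - S))"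
      by (simp only: Om_poly1[OF ee iS])
    also have "\<dots> = cscale (1 - e) (mat 1) - matrix_inv S" by (simp only: inv_r2[OF iW])
    finally show ?thesis .
  qed
  have "S ** XT - cscale (1 + e) XT = (S - cscale (1 + e) (mat 1)) ** Om e S ** X"
    by (simp add: hXT msimps)
  also have "\<dots> = cscale (1 - e) X - X ** matrix_inv S"
    unfolding a using comm_inv[OF iS cX] by (simp add: msimps)
  finally show ?thesis by (simp add: algebra_simps)
qed

lemma T2:
  fixes S X :: "complex^'n::finite^'n"
  assumes ee: "e * e = -1" and iS: "invertible S" and iX: "invertible X"
    and iW: "invertible (mat 1 - cscale (- e) (mat 1 - S))" and iO: "invertible (Om (- e) S)"
    and cX: "S ** X = X ** S" and hXT: "XT = Om (- e) S ** X"
  shows "matrix_inv S ** matrix_inv XT = cscale (1 + e) (matrix_inv XT) - matrix_inv X ** S - cscale (e - 1) (matrix_inv X)"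
proof -
  let ?W = "mat 1 - cscale (- e) (mat 1 - S)" and ?P = "mat 1 + cscale (- e) (mat 1 - matrix_inv S)"
  have PW: "?P = Om (- e) S ** ?W" by (simp only: Om_def inv_l2[OF iW])
  have iP: "invertible ?P" unfolding PW by (rule invertible_mult'[OF iO iW])
  have iOm: "matrix_inv (Om (- e) S) = ?W ** matrix_inv ?P"
    unfolding Om_def by (simp add: inv_mult[OF iP invertible_inv[OF iW]] inv_inv[OF iW])
  have p2: "(cscale (1 + e) (mat 1) - matrix_inv S) ** ?W = (S + cscale (e - 1) (mat 1)) ** ?P"
    using Om_poly2[OF ee iS] by (simp add: cs_negc algebra_simps)
  have a: "(cscale (1 + e) (mat 1) - matrix_inv S) ** matrix_inv (Om (- e) S) = S + cscale (e - 1) (mat 1)"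
  proof -
    have "(cscale (1 + e) (mat 1) - matrix_inv S) ** (?W ** matrix_inv ?P) = (cscale (1 + e) (mat 1) - matrix_inv S) ** ?W ** matrix_inv ?P"
      by (simp only: matrix_mul_assoc)
    also have "\<dots> = (S + cscale (e - 1) (mat 1)) ** ?P ** matrix_inv ?P" by (simp only: p2)
    also have "\<dots> = S + cscale (e - 1) (mat 1)" by (simp only: inv_r2[OF iP])
    finally show ?thesis unfolding iOm .
  qed
  have iXT: "matrix_inv XT = matrix_inv X ** matrix_inv (Om (- e) S)"
    unfolding hXT by (rule inv_mult[OF iO iX])
  have cXi: "matrix_inv S ** matrix_inv X = matrix_inv X ** matrix_inv S" using comm_pack[OF iS iX cX] by simp
  have cXi2: "S ** matrix_inv X = matrix_inv X ** S" using comm_pack[OF iS iX cX] by simp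
  have "cscale (1 + e) (matrix_inv XT) - matrix_inv S ** matrix_inv XT
      = (cscale (1 + e) (mat 1) - matrix_inv S) ** matrix_inv XT" by (simp add: msimps)
  also have "\<dots> = matrix_inv X ** ((cscale (1 + e) (mat 1) - matrix_inv S) ** matrix_inv (Om (- e) S))"
    unfolding iXT by (simp add: msimps cXi)
  also have "\<dots> = matrix_inv X ** S + cscale (e - 1) (matrix_inv X)" unfolding a by (simp add: msimps)
  finally show ?thesis by (simp add: algebra_simps)
qed

lemma XiF_shift: "invertible S \<Longrightarrow> XiF S (x + 1) t = S ** XiF S x t"
  by (simp add: XiF_def mpowi_succ matrix_mul_assoc)
lemma XibF_shift: "invertible Sb \<Longrightarrow> XibF Sb (x + 1) t = Sb ** XibF Sb x t"
  by (simp add: XibF_def mpowi_succ matrix_mul_assoc)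

lemma XF_gen_tshift:
  assumes iS: "invertible S" and iO: "invertible Q" and c: "S ** Q = Q ** S"
  shows "mpowi S x ** mpowi Q (t + 1) = Q ** (mpowi S x ** mpowi Q t)"
proof -
  have "mpowi S x ** mpowi Q (t + 1) = (mpowi S x ** Q) ** mpowi Q t" by (simp add: mpowi_succ[OF iO] matrix_mul_assoc)
  also have "mpowi S x ** Q = Q ** mpowi S x" by (rule mpowi_comm[OF iS c])
  finally show ?thesis by (simp add: matrix_mul_assoc)
qed

lemma XF_gen_comm:
  assumes iS: "invertible S" and iO: "invertible Q" and c: "S ** Q = Q ** S"
  shows "S ** (mpowi S x ** mpowi Q t) = (mpowi S x ** mpowi Q t) ** S"
proof -
  have a: "mpowi S x ** S = S ** mpowi S x" by (rule mpowi_comm[OF iS refl])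
  have b: "mpowi Q t ** S = S ** mpowi Q t" by (rule mpowi_comm[OF iO c[symmetric]])
  show ?thesis by (simp add: matrix_mul_assoc[symmetric] b) (simp add: matrix_mul_assoc a)
qed

lemma XF_gen_inv: "invertible S \<Longrightarrow> invertible Q \<Longrightarrow> invertible (mpowi S x ** mpowi Q t)"
  by (simp add: invertible_mult' invertible_mpowi)

lemma W_neg: "mat 1 - cscale (- \<i>) A = mat 1 + cscale \<i> A" by (simp add: cs_negc)

lemma qsol_swap: "qsol Ub V Kb K Xib Xi = qbsol Ub V K Kb Xi Xib" by (simp add: qsol_def qbsol_def)
lemma qbsol_swap: "qbsol U Vb Kb K Xib Xi = qsol U Vb K Kb Xi Xib" by (simp add: qsol_def qbsol_def)
lemma psol_swap: "psol Ub Vb Kb K Xib Xi = pbsol Ub Vb K Kb Xi Xib" by (simp add: psol_def pbsol_def)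
lemma pbsol_swap: "pbsol U V Kb K Xib Xi = psol U V K Kb Xi Xib" by (simp add: psol_def pbsol_def)
lemma regular_swap: "regular Kb K Xib Xi \<longleftrightarrow> regular K Kb Xi Xib" by (auto simp: regular_def)



lemma XiC_inv: "invertible (XiC S y t)" by (simp add: XiC_def invertible_mexp)
lemma XibC_inv: "invertible (XibC Sb y t)" by (simp add: XibC_def invertible_mexp)

theorem proposition5p1:
  fixes U :: "complex^'n2::finite^'m1::finite" and Ub :: "complex^'n1::finite^'m2::finite"
    and V :: "complex^'m1^'n1" and Vb :: "complex^'m2^'n2"
    and S :: "complex^'n1^'n1" and Sb :: "complex^'n2^'n2"
    and K :: "complex^'n2^'n1" and Kb :: "complex^'n1^'n2"
  shows
    \<comment> \<open>(i) continuous case\<close>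
    "(S ** K + K ** Sb = V ** U \<and> Sb ** Kb + Kb ** S = Vb ** Ub \<longrightarrow>
      (\<forall>(x::real) (t::real). regular K Kb (XiC S x t) (XibC Sb x t) \<longrightarrow>
        NLS_cont_at
          (\<lambda>x t. qsol U Vb K Kb (XiC S x t) (XibC Sb x t))
          (\<lambda>x t. qbsol Ub V K Kb (XiC S x t) (XibC Sb x t))
          (\<lambda>x t. psol U V K Kb (XiC S x t) (XibC Sb x t))
          (\<lambda>x t. pbsol Ub Vb K Kb (XiC S x t) (XibC Sb x t)) x t))
    \<and>
    \<comment> \<open>(ii) semi-discrete case\<close>
    (invertible S \<and> invertible Sb \<and>
     matrix_inv S ** K - K ** Sb = V ** U \<and> matrix_inv Sb ** Kb - Kb ** S = Vb ** Ub \<longrightarrow>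
      (\<forall>(x::int) (t::real).
        regular K Kb (XiS S (x - 1) t) (XibS Sb (x - 1) t) \<and>
        regular K Kb (XiS S x t) (XibS Sb x t) \<and>
        regular K Kb (XiS S (x + 1) t) (XibS Sb (x + 1) t) \<longrightarrow>
        NLS_semi_at
          (\<lambda>x t. qsol U Vb K Kb (XiS S x t) (XibS Sb x t))
          (\<lambda>x t. qbsol Ub V K Kb (XiS S x t) (XibS Sb x t))
          (\<lambda>x t. psol U V K Kb (XiS S x t) (XibS Sb x t))
          (\<lambda>x t. pbsol Ub Vb K Kb (XiS S x t) (XibS Sb x t)) x t))
    \<and>
    \<comment> \<open>(iii) fully discrete case\<close>
    (invertible S \<and> invertible Sb \<and>
     invertible (mat 1 - cscale \<i> (mat 1 - S)) \<and> invertible (mat 1 + cscale \<i> (mat 1 - Sb)) \<and>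
     invertible (Omega S) \<and> invertible (Omegabar Sb) \<and>
     matrix_inv S ** K - K ** Sb = V ** U \<and> matrix_inv Sb ** Kb - Kb ** S = Vb ** Ub \<longrightarrow>
      (\<forall>(x::int) (t::int).
        regular K Kb (XiF S (x - 1) t) (XibF Sb (x - 1) t) \<and>
        regular K Kb (XiF S x t) (XibF Sb x t) \<and>
        regular K Kb (XiF S (x + 1) t) (XibF Sb (x + 1) t) \<and>
        regular K Kb (XiF S x (t + 1)) (XibF Sb x (t + 1)) \<and>
        regular K Kb (XiF S (x + 1) (t + 1)) (XibF Sb (x + 1) (t + 1)) \<longrightarrow>
        NLS_full_at
          (\<lambda>x t. qsol U Vb K Kb (XiF S x t) (XibF Sb x t))
          (\<lambda>x t. qbsol Ub V K Kb (XiF S x t) (XibF Sb x t))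
          (\<lambda>x t. psol U V K Kb (XiF S x t) (XibF Sb x t))
          (\<lambda>x t. pbsol Ub Vb K Kb (XiF S x t) (XibF Sb x t)) x t))"
proof (intro conjI impI allI)
  assume syl: "S ** K + K ** Sb = V ** U \<and> Sb ** Kb + Kb ** S = Vb ** Ub"
  fix x t :: real
  assume reg: "regular K Kb (XiC S x t) (XibC Sb x t)"
  interpret C1: ccase U Ub V Vb S Sb K Kb "XiC S" "XibC Sb" \<i>
    by (unfold_locales; (rule XiC_dx XibC_dx XiC_dt XibC_dt XiC_comm XibC_comm XiC_inv XibC_inv)?; use syl in simp)
  have ni: "- (cscale (- \<i>) A ** B) = cscale \<i> A ** B" for A :: "complex^'n2^'n2" and B :: "complex^'n2^'n2"
    by (simp add: cs_negc mm_neg_l)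
  have ni2: "cscale (- \<i>) A ** B = - (cscale \<i> A ** B)" for A :: "complex^'n1^'n1" and B :: "complex^'n1^'n1"
    by (simp add: cs_negc mm_neg_l)
  interpret C2: ccase Ub U Vb V Sb S Kb K "XibC Sb" "XiC S" "- \<i>"
    by (unfold_locales; (rule XiC_dx XibC_dx XiC_dt XibC_dt XiC_comm XibC_comm XiC_inv XibC_inv)?; use syl in \<open>simp add: ni ni2 XiC_dt XibC_dt\<close>)
  have r1: "invertible (C1.Mf x t)" "invertible (C1.Nf x t)" using reg C1.reg_iff by auto
  have r2: "invertible (C2.Mf x t)" "invertible (C2.Nf x t)"
    using regular_swap[THEN iffD2, OF reg] C2.reg_iff[of x t] by auto
  note h1 = C1.qhalf[OF r1] and h2 = C2.qhalf[OF r2]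
  show "NLS_cont_at
          (\<lambda>x t. qsol U Vb K Kb (XiC S x t) (XibC Sb x t))
          (\<lambda>x t. qbsol Ub V K Kb (XiC S x t) (XibC Sb x t))
          (\<lambda>x t. psol U V K Kb (XiC S x t) (XibC Sb x t))
          (\<lambda>x t. pbsol Ub Vb K Kb (XiC S x t) (XibC Sb x t)) x t"
    using h1 h2[unfolded qsol_swap[of Ub V Kb K] qbsol_swap[of U Vb Kb K] psol_swap[of Ub Vb Kb K]]
    unfolding NLS_cont_at_def by (simp add: cs_negc)
next
  assume hyp: "invertible S \<and> invertible Sb \<and>
     matrix_inv S ** K - K ** Sb = V ** U \<and> matrix_inv Sb ** Kb - Kb ** S = Vb ** Ub"
  fix x :: int and t :: real
  assume reg: "regular K Kb (XiS S (x - 1) t) (XibS Sb (x - 1) t) \<and>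
        regular K Kb (XiS S x t) (XibS Sb x t) \<and>
        regular K Kb (XiS S (x + 1) t) (XibS Sb (x + 1) t)"
  have iS: "invertible S" and iSb: "invertible Sb" using hyp by auto
  interpret S1: scase U Ub V Vb S Sb K Kb "XiS S" "XibS Sb" \<i>
    by (unfold_locales; (rule XiS_shift[OF iS] XibS_shift[OF iSb] XiS_dt[OF iS] XibS_dt[OF iSb] XiS_comm[OF iS] XibS_comm[OF iSb] XiS_inv[OF iS] XibS_inv[OF iSb])?; use hyp in simp)
  have ni: "- (cscale (- \<i>) A ** B) = cscale \<i> A ** B" for A :: "complex^'n2^'n2" and B :: "complex^'n2^'n2"
    by (simp add: cs_negc mm_neg_l)
  have ni2: "cscale (- \<i>) A ** B = - (cscale \<i> A ** B)" for A :: "complex^'n1^'n1" and B :: "complex^'n1^'n1"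
    by (simp add: cs_negc mm_neg_l)
  interpret S2: scase Ub U Vb V Sb S Kb K "XibS Sb" "XiS S" "- \<i>"
    by (unfold_locales; (rule XiS_shift[OF iS] XibS_shift[OF iSb] XiS_dt[OF iS] XibS_dt[OF iSb] XiS_comm[OF iS] XibS_comm[OF iSb] XiS_inv[OF iS] XibS_inv[OF iSb])?; use hyp in \<open>simp add: ni ni2 XiS_dt[OF iS] XibS_dt[OF iSb]\<close>)
  note h1 = S1.qhalf[of x t] and h2 = S2.qhalf[of x t]
  show "NLS_semi_at
          (\<lambda>x t. qsol U Vb K Kb (XiS S x t) (XibS Sb x t))
          (\<lambda>x t. qbsol Ub V K Kb (XiS S x t) (XibS Sb x t))
          (\<lambda>x t. psol U V K Kb (XiS S x t) (XibS Sb x t))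
          (\<lambda>x t. pbsol Ub Vb K Kb (XiS S x t) (XibS Sb x t)) x t"
    using h1 h2[unfolded qsol_swap[of Ub V Kb K] qbsol_swap[of U Vb Kb K] psol_swap[of Ub Vb Kb K]]
      reg regular_swap[of Kb K] unfolding NLS_semi_at_def by (simp add: cs_negc)
next
  assume hyp: "invertible S \<and> invertible Sb \<and>
     invertible (mat 1 - cscale \<i> (mat 1 - S)) \<and> invertible (mat 1 + cscale \<i> (mat 1 - Sb)) \<and>
     invertible (Omega S) \<and> invertible (Omegabar Sb) \<and>
     matrix_inv S ** K - K ** Sb = V ** U \<and> matrix_inv Sb ** Kb - Kb ** S = Vb ** Ub"
  fix x t :: int
  assume reg: "regular K Kb (XiF S (x - 1) t) (XibF Sb (x - 1) t) \<and>
        regular K Kb (XiF S x t) (XibF Sb x t) \<and>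
        regular K Kb (XiF S (x + 1) t) (XibF Sb (x + 1) t) \<and>
        regular K Kb (XiF S x (t + 1)) (XibF Sb x (t + 1)) \<and>
        regular K Kb (XiF S (x + 1) (t + 1)) (XibF Sb (x + 1) (t + 1))"
  have iS: "invertible S" and iSb: "invertible Sb" and iW: "invertible (mat 1 - cscale \<i> (mat 1 - S))"
    and iWb: "invertible (mat 1 - cscale (- \<i>) (mat 1 - Sb))"
    and iO: "invertible (Om \<i> S)" and iOb: "invertible (Om (- \<i>) Sb)"
    using hyp by (auto simp: W_neg Omega_Om Omegabar_Om)
  have iW': "invertible (mat 1 - cscale (- (- \<i>)) (mat 1 - S))" using iW by simp
  have iO': "invertible (Om (- (- \<i>)) S)" using iO by simp
  have cO: "S ** Om \<i> S = Om \<i> S ** S" by (rule Om_comm[OF iS iW])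
  have cOb: "Sb ** Om (- \<i>) Sb = Om (- \<i>) Sb ** Sb" by (rule Om_comm[OF iSb iWb])
  have XiF_eq: "XiF S x t = mpowi S x ** mpowi (Om \<i> S) t" for x t by (simp add: XiF_def Omega_Om)
  have XibF_eq: "XibF Sb x t = mpowi Sb x ** mpowi (Om (- \<i>) Sb) t" for x t by (simp add: XibF_def Omegabar_Om)
  have ts: "XiF S x (t + 1) = Om \<i> S ** XiF S x t" for x t unfolding XiF_eq by (rule XF_gen_tshift[OF iS iO cO])
  have tsb: "XibF Sb x (t + 1) = Om (- \<i>) Sb ** XibF Sb x t" for x t unfolding XibF_eq by (rule XF_gen_tshift[OF iSb iOb cOb])
  have cm: "S ** XiF S x t = XiF S x t ** S" for x t unfolding XiF_eq by (rule XF_gen_comm[OF iS iO cO])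
  have cmb: "Sb ** XibF Sb x t = XibF Sb x t ** Sb" for x t unfolding XibF_eq by (rule XF_gen_comm[OF iSb iOb cOb])
  have iv: "invertible (XiF S x t)" for x t unfolding XiF_eq by (rule XF_gen_inv[OF iS iO])
  have ivb: "invertible (XibF Sb x t)" for x t unfolding XibF_eq by (rule XF_gen_inv[OF iSb iOb])
  have ts': "XiF S x (t + 1) = Om (- (- \<i>)) S ** XiF S x t" for x t using ts by simp
  interpret F1: fcase U Ub V Vb S Sb K Kb "XiF S" "XibF Sb" \<i>
  proof unfold_locales
    fix x t
    show "S ** XiF S x (t + 1) = cscale (1 + \<i>) (XiF S x (t + 1)) + cscale (1 - \<i>) (XiF S x t) - XiF S x t ** matrix_inv S"
      by (rule T1[OF _ iS iW cm ts]) simp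
    show "matrix_inv Sb ** matrix_inv (XibF Sb x (t + 1)) = cscale (1 + \<i>) (matrix_inv (XibF Sb x (t + 1)))
       - matrix_inv (XibF Sb x t) ** Sb - cscale (\<i> - 1) (matrix_inv (XibF Sb x t))"
      by (rule T2[OF _ iSb ivb iWb iOb cmb tsb]) simp
  qed (rule XiF_shift[OF iS] XibF_shift[OF iSb] cm cmb iv ivb | use hyp in simp)+
  interpret F2: fcase Ub U Vb V Sb S Kb K "XibF Sb" "XiF S" "- \<i>"
  proof unfold_locales
    fix x t
    show "Sb ** XibF Sb x (t + 1) = cscale (1 + - \<i>) (XibF Sb x (t + 1)) + cscale (1 - - \<i>) (XibF Sb x t) - XibF Sb x t ** matrix_inv Sb"
      by (rule T1[OF _ iSb iWb cmb tsb]) simp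
    show "matrix_inv S ** matrix_inv (XiF S x (t + 1)) = cscale (1 + - \<i>) (matrix_inv (XiF S x (t + 1)))
       - matrix_inv (XiF S x t) ** S - cscale (- \<i> - 1) (matrix_inv (XiF S x t))"
      by (rule T2[OF _ iS iv iW' iO' cm ts']) simp
  qed (rule XiF_shift[OF iS] XibF_shift[OF iSb] cm cmb iv ivb | use hyp in simp)+
  note h1 = F1.qhalf[of x t] and h2 = F2.qhalf[of x t]
  show "NLS_full_at
          (\<lambda>x t. qsol U Vb K Kb (XiF S x t) (XibF Sb x t))
          (\<lambda>x t. qbsol Ub V K Kb (XiF S x t) (XibF Sb x t))
          (\<lambda>x t. psol U V K Kb (XiF S x t) (XibF Sb x t))
          (\<lambda>x t. pbsol Ub Vb K Kb (XiF S x t) (XibF Sb x t)) x t"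
    using h1 h2[unfolded qsol_swap[of Ub V Kb K] qbsol_swap[of U Vb Kb K] psol_swap[of Ub Vb Kb K] pbsol_swap[of U V Kb K]]
      reg regular_swap[of Kb K] unfolding NLS_full_at_def by (simp add: cs_negc)
qed



end
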